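(* Let $\Delta$ be a triangle, $v$ a vertex, and $(\xi_m)_{m\ge0}$ the associated sequence of partitions of the angular interval $I$ at $v$, normalized to have length $1$, with $P_m$ the number of cutting points of $\xi_m$. Let $n\ge0$ and $c\ge 4$ be integers such that $e^c<P_n$ and $P_{n+c}\ge(4+2c)P_n$. Then there exist three cutting points $x_p,x_q,x_r$ in good position, with indices $p,q,r\in[n+1,n+c]$, whose pairwise distances are at most $e^c/P_n$.
   Context: Let $\Delta$ be a triangle and $v$ a vertex of $\Delta$. Identify the set of directions (rays) emanating from $v$ into $\Delta$ with an interval $I$ via angular coordinate, rescaled so that $I$ has length $1$. A generalized diagonal is a billiard orbit segment from a vertex to a vertex; its length is its number of reflections. A direction $x\in I$ whose billiard trajectory from $v$ is a generalized diagonal is assigned an index, namely the length of that generalized diagonal; we write $x_p$ for such a point of index $p$. The partition $\xi_m$ of $I$ is the partition into subintervals whose cutting points are exactly the directions of index at most $m$; $P_m$ is the number of its cutting points (the number of generalized diagonals from $v$ of length at most $m$). Three cutting points $x_p,x_q,x_r$ with indices $p<q<r$ are in good position if (1) $x_r$ lies strictly between $x_p$ and $x_q$, and (2) the open interval bounded by $x_p$ and $x_q$ contains no cutting point of index $\le r$ other than $x_r$. *)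

theory Defs
  imports "HOL-Analysis.Analysis"
begin

text \<open>A triangle is given by three
  non-collinear vertices a, b, c; the distinguished vertex v is a (the labelling
  is arbitrary, so this is no loss of generality).\<close>

definition nondeg_triangle :: "complex \<Rightarrow> complex \<Rightarrow> complex \<Rightarrow> bool" where
  "nondeg_triangle a b c \<longleftrightarrow> Im ((b - a) * cnj (c - a)) \<noteq> 0"

definition tri :: "complex \<Rightarrow> complex \<Rightarrow> complex \<Rightarrow> complex set" where
  "tri a b c = convex hull {a, b, c}"

text \<open>Reflection law at a boundary point z lying on the side [p,q]:
  the outgoing direction w_out is a positive multiple of the mirror image of the
  incoming direction w_in in the line through p,q.\<close>

definition reflects_at ::
  "complex \<Rightarrow> complex \<Rightarrow> complex \<Rightarrow> complex \<Rightarrow> complex \<Rightarrow> complex \<Rightarrow> bool" where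
  "reflects_at a b c zprev z znext \<longleftrightarrow>
     (\<exists>p q. p \<in> {a, b, c} \<and> q \<in> {a, b, c} \<and> p \<noteq> q \<and> z \<in> closed_segment p q \<and>
        (\<exists>t::real. t > 0 \<and>
           znext - z = of_real t * ((q - p) / cnj (q - p)) * cnj (z - zprev)))"

text \<open>A generalized diagonal starting at the vertex a with k reflections:
  a list of points a = z_0, z_1, ..., z_k, z_(k+1), where z_(k+1) is a vertex,
  z_1..z_k are non-vertex boundary points at which the billiard reflection law holds,
  and each open segment between consecutive points lies in the interior of the
  triangle (so each z_(i+1) is the first boundary hit of the ray leaving z_i).\<close>

definition gen_diag :: "complex \<Rightarrow> complex \<Rightarrow> complex \<Rightarrow> complex list \<Rightarrow> nat \<Rightarrow> bool" where
  "gen_diag a b c zs k \<longleftrightarrow>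
     length zs = k + 2 \<and> zs ! 0 = a \<and> zs ! (k + 1) \<in> {a, b, c} \<and>
     (\<forall>i \<le> k. zs ! i \<noteq> zs ! Suc i \<and>
               open_segment (zs ! i) (zs ! Suc i) \<subseteq> interior (tri a b c)) \<and>
     (\<forall>i \<in> {1..k}. zs ! i \<in> frontier (tri a b c) - {a, b, c} \<and>
               reflects_at a b c (zs ! (i - 1)) (zs ! i) (zs ! Suc i))"

text \<open>Normalized angular coordinate at vertex a of a direction w pointing into the
  triangle: the angle between w and the side direction b - a, divided by the angle
  of the triangle at a (so that the interval I has length 1).\<close>

definition ang_coord :: "complex \<Rightarrow> complex \<Rightarrow> complex \<Rightarrow> complex \<Rightarrow> real" where
  "ang_coord a b c w = \<bar>Arg (w / (b - a))\<bar> / \<bar>Arg ((c - a) / (b - a))\<bar>"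

definition has_index :: "complex \<Rightarrow> complex \<Rightarrow> complex \<Rightarrow> real \<Rightarrow> nat \<Rightarrow> bool" where
  "has_index a b c x p \<longleftrightarrow>
     (\<exists>zs. gen_diag a b c zs p \<and> x = ang_coord a b c (zs ! 1 - a))"

definition cut_points :: "complex \<Rightarrow> complex \<Rightarrow> complex \<Rightarrow> nat \<Rightarrow> real set" where
  "cut_points a b c m = {x. \<exists>p \<le> m. has_index a b c x p}"

definition P_count :: "complex \<Rightarrow> complex \<Rightarrow> complex \<Rightarrow> nat \<Rightarrow> nat" where
  "P_count a b c m = card (cut_points a b c m)"

definition strictly_between :: "real \<Rightarrow> real \<Rightarrow> real \<Rightarrow> bool" where
  "strictly_between y u w \<longleftrightarrow> min u w < y \<and> y < max u w"

definition good_position ::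
  "complex \<Rightarrow> complex \<Rightarrow> complex \<Rightarrow> real \<Rightarrow> nat \<Rightarrow> real \<Rightarrow> nat \<Rightarrow> real \<Rightarrow> nat \<Rightarrow> bool" where
  "good_position a b c xp p xq q xr r \<longleftrightarrow>
     has_index a b c xp p \<and> has_index a b c xq q \<and> has_index a b c xr r \<and>
     p < q \<and> q < r \<and>
     strictly_between xr xp xq \<and>
     (\<forall>y \<in> cut_points a b c r. strictly_between y xp xq \<longrightarrow> y = xr)"

end

theory Submission
  imports Defs
begin


definition cr :: "complex \<Rightarrow> complex \<Rightarrow> real" where
  "cr u v = Im (u * cnj v)"

lemma cr_alt: "cr u v = Im u * Re v - Re u * Im v"
  by (simp add: cr_def)

definition lamg :: "complex \<Rightarrow> complex \<Rightarrow> complex \<Rightarrow> complex \<Rightarrow> real" where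
  "lamg w0 p q z = cr (z - p) (q - p) / cr (w0 - p) (q - p)"

lemma lamg_o: "cr (w0 - p) (q - p) \<noteq> 0 \<Longrightarrow> lamg w0 p q w0 = 1"
  by (simp add: lamg_def)
lemma lamg_p: "lamg w0 p q p = 0"
  by (simp add: lamg_def cr_def)
lemma lamg_q: "lamg w0 p q q = 0"
  by (simp add: lamg_def cr_alt)
lemma cr_aff: "cr (u + r *\<^sub>R (v - w) - p) d = cr (u - p) d + r * (cr (v - p) d - cr (w - p) d)"
  by (simp add: cr_alt algebra_simps scaleR_conv_of_real)
lemma lamg_aff: "lamg w0 p q (u + r *\<^sub>R (v - w)) = lamg w0 p q u + r * (lamg w0 p q v - lamg w0 p q w)"
  unfolding lamg_def cr_aff by (simp add: add_divide_distrib) (simp add: divide_simps)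

lemma span2_gen:
  assumes "cr u w \<noteq> 0"
  shows "y = (cr y w / cr u w) *\<^sub>R u + (cr u y / cr u w) *\<^sub>R w"
proof -
  have 1: "cr y w * Re u + cr u y * Re w = cr u w * Re y" by (simp add: cr_alt algebra_simps)
  have 2: "cr y w * Im u + cr u y * Im w = cr u w * Im y" by (simp add: cr_alt algebra_simps)
  show ?thesis
  proof (rule complex_eqI)
    show "Re y = Re ((cr y w / cr u w) *\<^sub>R u + (cr u y / cr u w) *\<^sub>R w)"
      using 1 assms by (simp add: field_simps)
    show "Im y = Im ((cr y w / cr u w) *\<^sub>R u + (cr u y / cr u w) *\<^sub>R w)"
      using 2 assms by (simp add: field_simps)
  qed
qed

lemma Arg_upper:
  assumes "0 < Im z"
  shows "Arg z = pi/2 - arctan (Re z / Im z)"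
proof (cases "z = 0")
  case False
  show ?thesis
  proof (rule Arg_unique [of "norm z"])
    show "(cmod z) * exp (\<i> * (pi / 2 - arctan (Re z / Im z))) = z"
      apply (rule complex_eqI)
      using assms norm_complex_def [of z, symmetric]
      unfolding exp_Euler cos_diff sin_diff sin_of_real cos_of_real
      by (simp_all add: field_simps real_sqrt_divide sin_arctan cos_arctan)
  qed (use False arctan [of "Re z / Im z"] in auto)
qed (use assms in auto)

lemma absArg:
  assumes "Im z \<noteq> 0"
  shows "\<bar>Arg z\<bar> = pi/2 - arctan (Re z / \<bar>Im z\<bar>)"
proof (cases "Im z > 0")
  case True
  then have "Arg z > 0" using Arg_lt_pi by blast
  then show ?thesis using Arg_upper[OF True] True by simp
next
  case False
  then have n: "Im (cnj z) > 0" using assms by simp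
  have "z \<notin> \<real>" using assms by (simp add: complex_is_Real_iff)
  then have "Arg (cnj z) = - Arg z" by (simp add: Arg_cnj)
  moreover have "Arg (cnj z) > 0" using n Arg_lt_pi by blast
  ultimately have "\<bar>Arg z\<bar> = Arg (cnj z)" by simp
  then show ?thesis using Arg_upper[OF n] False assms by simp
qed

lemma conv_between:
  assumes "(p::real) < q" "0 < l" "l < 1"
  shows "p < (1 - l) * p + l * q" "(1 - l) * p + l * q < q"
proof -
  have h1: "l * (q - p) > 0" using assms by simp
  have h2: "l * (q - p) < 1 * (q - p)" using assms by (intro mult_strict_right_mono) simp_all
  have e: "(1 - l) * p + l * q = p + l * (q - p)" by (simp add: algebra_simps)
  show "p < (1 - l) * p + l * q" using h1 e by simp
  show "(1 - l) * p + l * q < q" using h2 e by simp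
qed

lemma conv_between':
  assumes "(q::real) < p" "0 < l" "l < 1"
  shows "q < (1 - l) * p + l * q" "(1 - l) * p + l * q < p"
  using conv_between[OF assms(1), of "1 - l"] assms(2,3) by (simp_all add: algebra_simps)

locale TL =
  fixes a b c :: complex
  assumes nd: "nondeg_triangle a b c"
begin

abbreviation "VV \<equiv> {a, b, c}"

definition lam :: "complex \<Rightarrow> complex \<Rightarrow> real" where
  "lam v z = (if v = a then lamg a b c z else if v = b then lamg b c a z else lamg c a b z)"

lemma D_ne: "cr (b - a) (c - a) \<noteq> 0"
  using nd by (simp add: nondeg_triangle_def cr_def)

lemma cr_self: "cr u u = 0" by (simp add: cr_alt mult.commute)

lemma den_a: "cr (a - b) (c - b) \<noteq> 0"
  using D_ne by (simp add: cr_alt algebra_simps)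
lemma den_b: "cr (b - c) (a - c) \<noteq> 0"
  using D_ne by (simp add: cr_alt algebra_simps)
lemma den_c: "cr (c - a) (b - a) \<noteq> 0"
  using D_ne by (simp add: cr_alt algebra_simps)

lemma distinct_abc: "a \<noteq> b" "a \<noteq> c" "b \<noteq> c"
proof -
  show "a \<noteq> b" using D_ne by (auto simp: cr_alt)
  show "a \<noteq> c" using D_ne by (auto simp: cr_alt)
  show "b \<noteq> c" using D_ne cr_self[of "c - a"] by auto
qed

lemma lam_a: "lam a z = lamg a b c z" by (simp add: lam_def)
lemma lam_b: "lam b z = lamg b c a z" using distinct_abc by (simp add: lam_def)
lemma lam_c: "lam c z = lamg c a b z" using distinct_abc by (simp add: lam_def)

lemma lam_vert: "lam a a = 1" "lam a b = 0" "lam a c = 0"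
                "lam b a = 0" "lam b b = 1" "lam b c = 0"
                "lam c a = 0" "lam c b = 0" "lam c c = 1"
  using den_a den_b den_c
  by (simp_all add: lam_a lam_b lam_c lamg_o lamg_p lamg_q)

lemma lam_aff: "lam v (u + r *\<^sub>R (x - w)) = lam v u + r * (lam v x - lam v w)"
  by (simp add: lam_def lamg_aff)

lemma lam_unique0:
  assumes "z = a + be *\<^sub>R (b - a) + ga *\<^sub>R (c - a)"
  shows "lam a z = 1 - be - ga" "lam b z = be" "lam c z = ga"
proof -
  have "\<And>v. lam v z = lam v a + be * (lam v b - lam v a) + ga * (lam v c - lam v a)"
    using assms lam_aff by metis
  then show "lam a z = 1 - be - ga" "lam b z = be" "lam c z = ga"
    by (simp_all add: lam_vert)
qed

lemma lam_unique:
  assumes "z = al *\<^sub>R a + be *\<^sub>R b + ga *\<^sub>R c" "al + be + ga = 1"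
  shows "lam a z = al" "lam b z = be" "lam c z = ga"
proof -
  have "al = 1 - be - ga" using assms(2) by simp
  then have "z = a + be *\<^sub>R (b - a) + ga *\<^sub>R (c - a)"
    unfolding assms(1) by (simp add: algebra_simps) (metis add.assoc assms(2) scaleR_add_left scaleR_one)
  from lam_unique0[OF this] show "lam a z = al" "lam b z = be" "lam c z = ga"
    using assms(2) by simp_all
qed

lemma span2: "z = a + (cr (z - a) (c - a) / cr (b - a) (c - a)) *\<^sub>R (b - a)
                    + (cr (b - a) (z - a) / cr (b - a) (c - a)) *\<^sub>R (c - a)"
  using span2_gen[OF D_ne, of "z - a"] by (simp add: algebra_simps)

lemma lam_decomp: "z = lam a z *\<^sub>R a + lam b z *\<^sub>R b + lam c z *\<^sub>R c"
  and lam_sum: "lam a z + lam b z + lam c z = 1"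
proof -
  define be where "be = cr (z - a) (c - a) / cr (b - a) (c - a)"
  define ga where "ga = cr (b - a) (z - a) / cr (b - a) (c - a)"
  have z: "z = a + be *\<^sub>R (b - a) + ga *\<^sub>R (c - a)"
    using span2 unfolding be_def ga_def by blast
  note L = lam_unique0[OF z]
  show "z = lam a z *\<^sub>R a + lam b z *\<^sub>R b + lam c z *\<^sub>R c"
    unfolding L by (subst z) (simp add: algebra_simps)
  show "lam a z + lam b z + lam c z = 1" unfolding L by simp
qed


lemma in_tri: "z \<in> tri a b c \<longleftrightarrow> lam a z \<ge> 0 \<and> lam b z \<ge> 0 \<and> lam c z \<ge> 0"
proof
  assume "z \<in> tri a b c"
  then obtain u v w where "0 \<le> u" "0 \<le> v" "0 \<le> w" "u + v + w = 1" "z = u *\<^sub>R a + v *\<^sub>R b + w *\<^sub>R c"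
    unfolding tri_def convex_hull_3 by auto
  then show "lam a z \<ge> 0 \<and> lam b z \<ge> 0 \<and> lam c z \<ge> 0"
    using lam_unique by simp
next
  assume "lam a z \<ge> 0 \<and> lam b z \<ge> 0 \<and> lam c z \<ge> 0"
  then show "z \<in> tri a b c"
  proof -
    have "z = lam a z *\<^sub>R a + lam b z *\<^sub>R b + lam c z *\<^sub>R c \<and> 0 \<le> lam a z \<and> 0 \<le> lam b z \<and> 0 \<le> lam c z \<and> lam a z + lam b z + lam c z = 1"
      using \<open>lam a z \<ge> 0 \<and> lam b z \<ge> 0 \<and> lam c z \<ge> 0\<close> lam_sum[of z] by (simp add: lam_decomp[of z, symmetric])
    then show ?thesis unfolding tri_def convex_hull_3 by blast
  qed
qed

lemma not_collinear: "\<not> collinear {a, b, c}"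
proof
  assume "collinear {a, b, c}"
  then have "collinear {0, a - b, c - b}" using collinear_3[of a b c] unfolding NO_MATCH_def by blast
  then have "(c - b) / (a - b) \<in> \<real>" by (simp add: collinear_iff_Reals)
  then obtain r where r: "(c - b) / (a - b) = of_real r" by (metis Reals_cases)
  then have "c - b = of_real r * (a - b)" using distinct_abc by (simp add: field_simps)
  then have "cr (a - b) (c - b) = cr (a - b) (of_real r * (a - b))" by simp
  also have "\<dots> = 0" by (simp add: cr_alt algebra_simps)
  finally have "cr (a - b) (c - b) = 0" .
  then show False using den_a by simp
qed

lemma affind: "\<not> affine_dependent {a, b, c}"
  using not_collinear collinear_3_eq_affine_dependent by blast

lemma interior_eq: "interior (tri a b c) = {y. \<exists>u. (\<forall>x\<in>{a,b,c}. 0 < u x) \<and> sum u {a,b,c} = 1 \<and> (\<Sum>x\<in>{a,b,c}. u x *\<^sub>R x) = y}"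
proof -
  have card: "card {a, b, c} = 3" using distinct_abc by simp
  have "\<not> card {a,b,c} \<le> DIM(complex)" using card by simp
  then show ?thesis
    unfolding tri_def interior_convex_hull_explicit_minimal[OF affind] by (simp only: if_False)
qed

lemma in_interior: "z \<in> interior (tri a b c) \<longleftrightarrow> lam a z > 0 \<and> lam b z > 0 \<and> lam c z > 0"
proof
  assume "z \<in> interior (tri a b c)"
  then have "\<exists>u. (\<forall>x\<in>{a,b,c}. 0 < u x) \<and> sum u {a,b,c} = 1 \<and> (\<Sum>x\<in>{a,b,c}. u x *\<^sub>R x) = z"
    unfolding interior_eq by simp
  then obtain u where u: "\<forall>x\<in>{a,b,c}. 0 < u x" "sum u {a,b,c} = 1" "(\<Sum>x\<in>{a,b,c}. u x *\<^sub>R x) = z"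
    by blast
  have s1: "sum u {a,b,c} = u a + u b + u c" using distinct_abc by (simp add: add.assoc)
  have s2: "(\<Sum>x\<in>{a,b,c}. u x *\<^sub>R x) = u a *\<^sub>R a + u b *\<^sub>R b + u c *\<^sub>R c"
    using distinct_abc by (simp add: add.assoc)
  have e1: "u a + u b + u c = 1" using u(2) s1 by simp
  have e2: "z = u a *\<^sub>R a + u b *\<^sub>R b + u c *\<^sub>R c" using u(3) s2 by simp
  note L = lam_unique[OF e2 e1]
  show "lam a z > 0 \<and> lam b z > 0 \<and> lam c z > 0" unfolding L using u(1) by simp
next
  assume H: "lam a z > 0 \<and> lam b z > 0 \<and> lam c z > 0"
  define u where "u = (\<lambda>x. if x = a then lam a z else if x = b then lam b z else lam c z)"
  have ua: "u a = lam a z" "u b = lam b z" "u c = lam c z" using distinct_abc by (simp_all add: u_def)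
  have s1: "sum u {a,b,c} = u a + u b + u c" using distinct_abc by (simp add: add.assoc)
  have s2: "(\<Sum>x\<in>{a,b,c}. u x *\<^sub>R x) = u a *\<^sub>R a + u b *\<^sub>R b + u c *\<^sub>R c"
    using distinct_abc by (simp add: add.assoc)
  have "(\<forall>x\<in>{a,b,c}. 0 < u x) \<and> sum u {a,b,c} = 1 \<and> (\<Sum>x\<in>{a,b,c}. u x *\<^sub>R x) = z"
    unfolding s1 s2 ua using H lam_sum[of z] lam_decomp[of z, symmetric] ua by simp
  then show "z \<in> interior (tri a b c)" unfolding interior_eq by (simp only: mem_Collect_eq) (rule exI)
qed

lemma closed_tri: "closed (tri a b c)"
  unfolding tri_def by (simp add: compact_imp_closed finite_imp_compact compact_convex_hull)

lemma in_frontier: "z \<in> frontier (tri a b c) \<longleftrightarrow> z \<in> tri a b c \<and> \<not> (lam a z > 0 \<and> lam b z > 0 \<and> lam c z > 0)"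
  using closed_tri in_interior by (simp add: frontier_def)


lemma lam_comb: "lam v ((1 - t) *\<^sub>R u + t *\<^sub>R x) = (1 - t) * lam v u + t * lam v x"
proof -
  have "(1 - t) *\<^sub>R u + t *\<^sub>R x = u + t *\<^sub>R (x - u)" by (simp add: algebra_simps)
  then show ?thesis using lam_aff[of v u t x u] by (simp add: algebra_simps)
qed

lemma lam_comb2: "lam v (u + t *\<^sub>R (x - u)) = (1 - t) * lam v u + t * lam v x"
  using lam_aff[of v u t x u] by (simp add: algebra_simps)

lemma seg_interior:
  assumes "u \<in> tri a b c" "x \<in> tri a b c"
    and "lam a u > 0 \<or> lam a x > 0" "lam b u > 0 \<or> lam b x > 0" "lam c u > 0 \<or> lam c x > 0"
  shows "open_segment u x \<subseteq> interior (tri a b c)"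
proof
  fix y assume "y \<in> open_segment u x"
  then obtain t where t: "0 < t" "t < 1" "y = (1 - t) *\<^sub>R u + t *\<^sub>R x"
    by (auto simp: in_segment)
  have pos: "(1 - t) * p + t * q > 0" if "p \<ge> 0" "q \<ge> 0" "p > 0 \<or> q > 0" for p q :: real
    using that t by (smt (verit) mult_pos_pos mult_nonneg_nonneg)
  show "y \<in> interior (tri a b c)"
    unfolding in_interior t(3) lam_comb using assms in_tri pos by meson
qed

lemma seg_not_interior:
  assumes "u \<noteq> x" "open_segment u x \<subseteq> interior (tri a b c)" "v \<in> VV" "lam v u = 0" "lam v x = 0"
  shows False
proof -
  let ?y = "(1 - 1/2) *\<^sub>R u + (1/2::real) *\<^sub>R x"
  have "?y \<in> open_segment u x" using assms(1) unfolding in_segment by (intro conjI exI[of _ "1/2"]) auto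
  then have "?y \<in> interior (tri a b c)" using assms(2) by blast
  then have "lam v ?y > 0" using assms(3) unfolding in_interior by auto
  then show False unfolding lam_comb using assms(4,5) by simp
qed

definition osd :: "complex \<Rightarrow> complex \<Rightarrow> bool" where
  "osd w z \<longleftrightarrow> w \<in> VV \<and> lam w z = 0 \<and> (\<forall>v\<in>VV. v \<noteq> w \<longrightarrow> lam v z > 0)"

lemma lam_eq_vert: "lam a z = 1 \<Longrightarrow> lam b z = 0 \<Longrightarrow> lam c z = 0 \<Longrightarrow> z = a"
  "lam a z = 0 \<Longrightarrow> lam b z = 1 \<Longrightarrow> lam c z = 0 \<Longrightarrow> z = b"
  "lam a z = 0 \<Longrightarrow> lam b z = 0 \<Longrightarrow> lam c z = 1 \<Longrightarrow> z = c"
  using lam_decomp[of z] by simp_all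

lemma fr_osd: "z \<in> frontier (tri a b c) \<and> z \<notin> VV \<longleftrightarrow> (\<exists>w. osd w z)"
proof
  assume H: "z \<in> frontier (tri a b c) \<and> z \<notin> VV"
  then have ge: "lam a z \<ge> 0" "lam b z \<ge> 0" "lam c z \<ge> 0" and nz: "\<not> (lam a z > 0 \<and> lam b z > 0 \<and> lam c z > 0)"
    using in_frontier in_tri by auto
  have s: "lam a z + lam b z + lam c z = 1" by (rule lam_sum)
  have nv: "z \<noteq> a" "z \<noteq> b" "z \<noteq> c" using H by auto
  show "\<exists>w. osd w z"
  proof (cases "lam a z = 0")
    case True
    then have "lam b z \<noteq> 0" "lam c z \<noteq> 0" using lam_eq_vert s nv by auto
    then show ?thesis using True ge distinct_abc by (intro exI[of _ a]) (auto simp: osd_def)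
  next
    case Fa: False
    show ?thesis
    proof (cases "lam b z = 0")
      case True
      then have "lam c z \<noteq> 0" using lam_eq_vert s nv Fa by auto
      then show ?thesis using True Fa ge distinct_abc by (intro exI[of _ b]) (auto simp: osd_def)
    next
      case False
      then have "lam c z = 0" using nz ge Fa by auto
      then show ?thesis using False Fa ge distinct_abc by (intro exI[of _ c]) (auto simp: osd_def)
    qed
  qed
next
  assume "\<exists>w. osd w z"
  then obtain w where w: "osd w z" by blast
  then have "z \<in> tri a b c" "\<not> (lam a z > 0 \<and> lam b z > 0 \<and> lam c z > 0)"
    unfolding osd_def in_tri by (auto simp: less_imp_le)
  moreover have "z \<notin> VV"
    using w distinct_abc unfolding osd_def by (auto simp: lam_vert)
  ultimately show "z \<in> frontier (tri a b c) \<and> z \<notin> VV" using in_frontier by auto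
qed

lemma osd_unique: "osd w z \<Longrightarrow> osd w' z \<Longrightarrow> w = w'"
  unfolding osd_def by force

lemma osd_tri: "osd w z \<Longrightarrow> z \<in> tri a b c"
  unfolding osd_def in_tri by (auto simp: less_imp_le)

definition opp :: "complex \<Rightarrow> complex" where
  "opp z = (SOME w. osd w z)"

lemma opp_eq: "osd w z \<Longrightarrow> opp z = w"
  unfolding opp_def by (metis osd_unique someI)

lemma osd_opp: "osd w z \<Longrightarrow> osd (opp z) z"
  using opp_eq by simp


lemma lam_vv: "r \<in> VV \<Longrightarrow> p \<in> VV \<Longrightarrow> lam r p = (if r = p then 1 else 0)"
  using distinct_abc lam_vert by auto

definition sp :: "complex \<Rightarrow> complex" where
  "sp w = (if w = a then b else if w = b then c else a)"
definition sq :: "complex \<Rightarrow> complex" where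
  "sq w = (if w = a then c else if w = b then a else b)"
definition rh :: "complex \<Rightarrow> complex" where
  "rh w = (sq w - sp w) / cnj (sq w - sp w)"
definition refl :: "complex \<Rightarrow> complex \<Rightarrow> complex" where
  "refl w z = sp w + rh w * cnj (z - sp w)"

lemma sp_sq_ne: "sp w \<noteq> sq w"
  using distinct_abc by (auto simp: sp_def sq_def)

lemma sp_sq_abc: "sp a = b" "sq a = c" "sp b = c" "sq b = a" "sp c = a" "sq c = b"
  using distinct_abc by (simp_all add: sp_def sq_def)

lemma lam_zero_iff: assumes "w \<in> VV" shows "lam w z = 0 \<longleftrightarrow> cr (z - sp w) (sq w - sp w) = 0"
proof -
  consider "w = a" | "w = b" | "w = c" using assms by blast
  then show ?thesis
  proof cases
    case 1 then show ?thesis using den_a by (simp add: lam_a lamg_def sp_sq_abc)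
  next
    case 2 then show ?thesis using den_b by (simp add: lam_b lamg_def sp_sq_abc)
  next
    case 3 then show ?thesis using den_c by (simp add: lam_c lamg_def sp_sq_abc)
  qed
qed

lemma rh_pair:
  assumes "w \<in> VV" "p \<in> VV" "q \<in> VV" "p \<noteq> q" "p \<noteq> w" "q \<noteq> w"
  shows "(q - p) / cnj (q - p) = rh w"
proof -
  have sym: "(q - p) / cnj (q - p) = (p - q) / cnj (p - q)"
    by (metis minus_diff_eq complex_cnj_minus minus_divide_divide)
  have "(p = sp w \<and> q = sq w) \<or> (p = sq w \<and> q = sp w)"
  proof -
    consider "w = a" | "w = b" | "w = c" using assms by blast
    then show ?thesis
    proof cases
      case 1 then have "p \<in> {b, c}" "q \<in> {b, c}" using assms by auto
      then show ?thesis using 1 assms(4) by (auto simp: sp_sq_abc)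
    next
      case 2 then have "p \<in> {a, c}" "q \<in> {a, c}" using assms by auto
      then show ?thesis using 2 assms(4) by (auto simp: sp_sq_abc)
    next
      case 3 then have "p \<in> {a, b}" "q \<in> {a, b}" using assms by auto
      then show ?thesis using 3 assms(4) by (auto simp: sp_sq_abc)
    qed
  qed
  then show ?thesis using sym unfolding rh_def by auto
qed

lemma rh_unit: "rh w * cnj (rh w) = 1"
proof -
  have "sq w - sp w \<noteq> 0" using sp_sq_ne[of w] by auto
  then show ?thesis by (simp add: rh_def)
qed

lemma refl_fix: assumes "w \<in> VV" "lam w z = 0" shows "refl w z = z"
proof -
  define d where "d = sq w - sp w"
  define y where "y = z - sp w"
  have d0: "d \<noteq> 0" using sp_sq_ne[of w] by (auto simp: d_def)
  have "cr y d = 0" using assms lam_zero_iff by (simp add: y_def d_def)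
  then have "y * cnj d = cnj y * d"
    by (intro complex_eqI) (simp_all add: cr_def algebra_simps)
  then have "d / cnj d * cnj y = y" using d0 by (simp add: field_simps)
  then show ?thesis unfolding refl_def rh_def d_def[symmetric] y_def[symmetric] by (simp add: y_def)
qed

lemma refl_aff: "refl w (u + r *\<^sub>R (x - y)) = refl w u + r *\<^sub>R (refl w x - refl w y)"
  by (simp add: refl_def scaleR_conv_of_real algebra_simps)

lemma refl_inv: "refl w (refl w z) = z"
proof -
  have "rh w * cnj (rh w * cnj (z - sp w)) = (rh w * cnj (rh w)) * (z - sp w)" by simp
  also have "\<dots> = z - sp w" using rh_unit by simp
  finally have e: "rh w * cnj (rh w * cnj (z - sp w)) = z - sp w" .
  show ?thesis unfolding refl_def add_diff_cancel_left' e by simp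
qed

lemma refl_law:
  assumes "w \<in> VV" "lam w z = 0"
  shows "refl w (z + of_real t * rh w * cnj (z - z')) = z + t *\<^sub>R (z - z')"
proof -
  have "refl w (z + of_real t * rh w * cnj (z - z')) = refl w z + of_real t * (rh w * cnj (rh w)) * (z - z')"
    by (simp add: refl_def algebra_simps)
  then show ?thesis using refl_fix[OF assms] rh_unit by (simp add: scaleR_conv_of_real)
qed

primrec Rf :: "complex list \<Rightarrow> complex \<Rightarrow> complex" where
  "Rf [] z = z"
| "Rf (w # ws) z = refl w (Rf ws z)"

lemma Rf_aff: "Rf ws (u + r *\<^sub>R (x - y)) = Rf ws u + r *\<^sub>R (Rf ws x - Rf ws y)"
  by (induction ws) (simp_all add: refl_aff)

lemma Rf_snoc: "Rf (ws @ [w]) z = Rf ws (refl w z)"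
  by (induction ws) simp_all

lemma Rf_inj: "Rf ws u = Rf ws x \<Longrightarrow> u = x"
  by (induction ws) (simp_all, metis refl_inv)

lemma Rf_fix: "w \<in> VV \<Longrightarrow> lam w z = 0 \<Longrightarrow> Rf (ws @ [w]) z = Rf ws z"
  by (simp add: Rf_snoc refl_fix)

lemma Rf_law:
  assumes "w \<in> VV" "lam w z = 0"
  shows "Rf (ws @ [w]) (z + of_real t * rh w * cnj (z - z')) - Rf (ws @ [w]) z = t *\<^sub>R (Rf ws z - Rf ws z')"
proof -
  have e: "refl w (z + of_real t * rh w * cnj (z - z')) = z + t *\<^sub>R (z - z')" by (rule refl_law[OF assms])
  show ?thesis unfolding Rf_snoc e refl_fix[OF assms] Rf_aff by simp
qed

lemma reflects_canon:
  assumes "reflects_at a b c zp z zn" "osd w z"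
  shows "\<exists>t>0. zn - z = of_real t * rh w * cnj (z - zp)"
proof -
  obtain p q t where pq: "p \<in> VV" "q \<in> VV" "p \<noteq> q" "z \<in> closed_segment p q" "t > 0"
    "zn - z = of_real t * ((q - p) / cnj (q - p)) * cnj (z - zp)"
    using assms(1) unfolding reflects_at_def by blast
  obtain r where r: "r \<in> VV" "r \<noteq> p" "r \<noteq> q" using pq(1-3) distinct_abc by blast
  obtain s where s: "z = (1 - s) *\<^sub>R p + s *\<^sub>R q" using pq(4) by (auto simp: in_segment)
  have "lam r z = 0" unfolding s lam_comb using lam_vv r pq by simp
  then have rw: "r = w" using assms(2) r(1) unfolding osd_def by force
  have "p \<noteq> w" "q \<noteq> w" using r(2,3) rw by auto
  then have "(q - p) / cnj (q - p) = rh w"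
    using rh_pair[of w p q] pq(1-3) r(1) rw by blast
  then show ?thesis using pq by auto
qed


lemma osd_V: "osd w z \<Longrightarrow> w \<in> VV" by (simp add: osd_def)
lemma osd_lam0: "osd w z \<Longrightarrow> lam w z = 0" by (simp add: osd_def)
lemma osd_pos: assumes "osd w z" "v \<in> VV" "v \<noteq> w" shows "lam v z > 0"
  using assms unfolding osd_def by blast

lemma gd_basic:
  assumes "gen_diag a b c zs k"
  shows "k \<ge> 1" "length zs = k + 2" "zs ! 0 = a"
    and "\<And>i. 1 \<le> i \<Longrightarrow> i \<le> k \<Longrightarrow> osd (opp (zs ! i)) (zs ! i)"
    and "opp (zs ! 1) = a"
    and "\<And>i. 1 \<le> i \<Longrightarrow> i < k \<Longrightarrow> opp (zs ! i) \<noteq> opp (zs ! Suc i)"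
    and "zs ! (k + 1) = opp (zs ! k)"
    and "\<And>i. 1 \<le> i \<Longrightarrow> i \<le> k \<Longrightarrow> \<exists>t>0. zs ! Suc i - zs ! i = of_real t * rh (opp (zs ! i)) * cnj (zs ! i - zs ! (i - 1))"
proof -
  have L: "length zs = k + 2" and Z0: "zs ! 0 = a" and ZE: "zs ! (k + 1) \<in> VV"
    and H1: "\<And>i. i \<le> k \<Longrightarrow> zs ! i \<noteq> zs ! Suc i \<and> open_segment (zs ! i) (zs ! Suc i) \<subseteq> interior (tri a b c)"
    and H2: "\<And>i. i \<in> {1..k} \<Longrightarrow> zs ! i \<in> frontier (tri a b c) - VV \<and> reflects_at a b c (zs ! (i - 1)) (zs ! i) (zs ! Suc i)"
    using assms unfolding gen_diag_def by auto
  show "length zs = k + 2" "zs ! 0 = a" by (fact L, fact Z0)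
  have seg: False if "i \<le> k" "v \<in> VV" "lam v (zs ! i) = 0" "lam v (zs ! Suc i) = 0" for i v
    using seg_not_interior[of "zs ! i" "zs ! Suc i" v] H1[OF that(1)] that by blast
  show k1: "k \<ge> 1"
  proof (rule ccontr)
    assume "\<not> k \<ge> 1"
    then have k0: "k = 0" by simp
    then have "zs ! 1 \<in> VV" using ZE by simp
    moreover have "zs ! 1 \<noteq> a" using H1[of 0] Z0 k0 by auto
    ultimately consider "zs ! 1 = b" | "zs ! 1 = c" by blast
    then show False
    proof cases
      case 1 then show False using seg[of 0 c] k0 Z0 lam_vert by simp
    next
      case 2 then show False using seg[of 0 b] k0 Z0 lam_vert by simp
    qed
  qed
  show osd_i: "\<And>i. 1 \<le> i \<Longrightarrow> i \<le> k \<Longrightarrow> osd (opp (zs ! i)) (zs ! i)"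
    using H2 fr_osd osd_opp by (metis Diff_iff atLeastAtMost_iff)
  show "opp (zs ! 1) = a"
  proof (rule ccontr)
    assume ne: "opp (zs ! 1) \<noteq> a"
    have o: "osd (opp (zs ! 1)) (zs ! 1)" using osd_i k1 by simp
    then have "lam (opp (zs ! 1)) a = 0" using lam_vv[of "opp (zs ! 1)" a] ne osd_V by auto
    then show False using seg[of 0 "opp (zs ! 1)"] o osd_V osd_lam0 Z0 by auto
  qed
  show "\<And>i. 1 \<le> i \<Longrightarrow> i < k \<Longrightarrow> opp (zs ! i) \<noteq> opp (zs ! Suc i)"
  proof
    fix i assume i: "1 \<le> i" "i < k" and eq: "opp (zs ! i) = opp (zs ! Suc i)"
    have o1: "osd (opp (zs ! i)) (zs ! i)" using osd_i i by simp
    have o2: "osd (opp (zs ! i)) (zs ! Suc i)" using osd_i[of "Suc i"] i eq by simp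
    show False using seg[of i "opp (zs ! i)"] o1 o2 osd_V osd_lam0 i by auto
  qed
  show "zs ! (k + 1) = opp (zs ! k)"
  proof (rule ccontr)
    assume ne: "zs ! (k + 1) \<noteq> opp (zs ! k)"
    have o: "osd (opp (zs ! k)) (zs ! k)" using osd_i k1 by simp
    then have "lam (opp (zs ! k)) (zs ! (k + 1)) = 0" using lam_vv ne osd_V ZE by auto
    then show False using seg[of k "opp (zs ! k)"] o osd_V osd_lam0 by auto
  qed
  show "\<And>i. 1 \<le> i \<Longrightarrow> i \<le> k \<Longrightarrow> \<exists>t>0. zs ! Suc i - zs ! i = of_real t * rh (opp (zs ! i)) * cnj (zs ! i - zs ! (i - 1))"
    using H2 reflects_canon osd_i by auto
qed

definition tos :: "complex list \<Rightarrow> nat \<Rightarrow> complex list" where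
  "tos zs k = map (\<lambda>i. opp (zs ! i)) [1..<k+1]"

lemma tos_len: "length (tos zs k) = k" by (simp add: tos_def)
lemma tos_nth: "i < k \<Longrightarrow> tos zs k ! i = opp (zs ! Suc i)"
  unfolding tos_def by (subst nth_map) (simp_all del: upt_Suc)
lemma tos_take_Suc: "i < k \<Longrightarrow> take (Suc i) (tos zs k) = take i (tos zs k) @ [opp (zs ! Suc i)]"
  by (simp add: take_Suc_conv_app_nth tos_len tos_nth)

lemma traj_step:
  assumes "gen_diag a b c zs k" "i \<le> k"
  shows "\<exists>T>0. Rf (take i (tos zs k)) (zs ! Suc i) - Rf (take i (tos zs k)) (zs ! i) = T *\<^sub>R (zs ! 1 - a)"
  using assms(2)
proof (induction i)
  case 0
  then show ?case using gd_basic(3)[OF assms(1)] by (intro exI[of _ 1]) simp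
next
  case (Suc i)
  then obtain T where T: "T > 0" "Rf (take i (tos zs k)) (zs ! Suc i) - Rf (take i (tos zs k)) (zs ! i) = T *\<^sub>R (zs ! 1 - a)"
    by auto
  let ?w = "opp (zs ! Suc i)"
  have o: "osd ?w (zs ! Suc i)" using gd_basic(4)[OF assms(1), of "Suc i"] Suc by simp
  obtain t where t: "t > 0" "zs ! Suc (Suc i) - zs ! Suc i = of_real t * rh ?w * cnj (zs ! Suc i - zs ! i)"
    using gd_basic(8)[OF assms(1), of "Suc i"] Suc by auto
  have e: "zs ! Suc (Suc i) = zs ! Suc i + of_real t * rh ?w * cnj (zs ! Suc i - zs ! i)"
    using t(2) by (simp add: algebra_simps)
  have tk: "take (Suc i) (tos zs k) = take i (tos zs k) @ [?w]" using tos_take_Suc Suc by simp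
  have "Rf (take (Suc i) (tos zs k)) (zs ! Suc (Suc i)) - Rf (take (Suc i) (tos zs k)) (zs ! Suc i)
        = t *\<^sub>R (Rf (take i (tos zs k)) (zs ! Suc i) - Rf (take i (tos zs k)) (zs ! i))"
    unfolding tk e by (rule Rf_law[OF osd_V[OF o] osd_lam0[OF o]])
  also have "\<dots> = (t * T) *\<^sub>R (zs ! 1 - a)" using T by simp
  finally show ?case using t T by (intro exI[of _ "t * T"]) simp
qed

lemma traj_next:
  assumes "gen_diag a b c zs k" "i \<le> k"
  shows "Rf (take (Suc i) (tos zs k)) (zs ! Suc i) = Rf (take i (tos zs k)) (zs ! Suc i)"
proof (cases "i < k")
  case True
  have o: "osd (opp (zs ! Suc i)) (zs ! Suc i)" using gd_basic(4)[OF assms(1), of "Suc i"] True by simp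
  show ?thesis unfolding tos_take_Suc[OF True] by (rule Rf_fix[OF osd_V[OF o] osd_lam0[OF o]])
next
  case False
  then have "i = k" using assms by simp
  then show ?thesis by (simp add: tos_len)
qed

lemma traj_unfold:
  assumes "gen_diag a b c zs k"
  shows "\<exists>\<sigma>. \<sigma> 0 = 0 \<and> (\<forall>i\<le>k. \<sigma> i < \<sigma> (Suc i)) \<and>
    (\<forall>i\<le>k. Rf (take i (tos zs k)) (zs ! i) = a + \<sigma> i *\<^sub>R (zs ! 1 - a) \<and>
             Rf (take i (tos zs k)) (zs ! Suc i) = a + \<sigma> (Suc i) *\<^sub>R (zs ! 1 - a))"
proof -
  let ?d = "zs ! 1 - a"
  let ?D = "\<lambda>i. Rf (take i (tos zs k)) (zs ! Suc i) - Rf (take i (tos zs k)) (zs ! i)"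
  have "\<forall>i. \<exists>T. i \<le> k \<longrightarrow> T > 0 \<and> ?D i = T *\<^sub>R ?d"
    using traj_step[OF assms] by blast
  then obtain T where T: "\<And>i. i \<le> k \<Longrightarrow> T i > 0 \<and> ?D i = T i *\<^sub>R ?d" by metis
  define \<sigma> where "\<sigma> i = (\<Sum>l<i. T l)" for i
  have X: "Rf (take i (tos zs k)) (zs ! i) = a + \<sigma> i *\<^sub>R ?d" if "i \<le> Suc k" for i
    using that
  proof (induction i)
    case 0
    then show ?case using gd_basic(3)[OF assms] by (simp add: \<sigma>_def)
  next
    case (Suc i)
    have "Rf (take (Suc i) (tos zs k)) (zs ! Suc i) = Rf (take i (tos zs k)) (zs ! Suc i)"
      using traj_next[OF assms] Suc by simp
    also have "\<dots> = ?D i + Rf (take i (tos zs k)) (zs ! i)" by simp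
    also have "\<dots> = T i *\<^sub>R ?d + (a + \<sigma> i *\<^sub>R ?d)"
    proof -
      have h: "?D i = T i *\<^sub>R ?d" using T[of i] Suc.prems by simp
      have h2: "Rf (take i (tos zs k)) (zs ! i) = a + \<sigma> i *\<^sub>R ?d" using Suc by simp
      show ?thesis by (subst h, subst h2, rule refl)
    qed
    also have "\<dots> = a + \<sigma> (Suc i) *\<^sub>R ?d" by (simp add: \<sigma>_def algebra_simps)
    finally show ?case .
  qed
  show ?thesis
  proof (intro exI[of _ \<sigma>] conjI allI impI)
    show "\<sigma> 0 = 0" by (simp add: \<sigma>_def)
    fix i assume i: "i \<le> k"
    show "\<sigma> i < \<sigma> (Suc i)" using T[OF i] by (simp add: \<sigma>_def)
    show "Rf (take i (tos zs k)) (zs ! i) = a + \<sigma> i *\<^sub>R ?d" using X i by simp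
    show "Rf (take i (tos zs k)) (zs ! Suc i) = a + \<sigma> (Suc i) *\<^sub>R ?d"
      using X[of "Suc i"] traj_next[OF assms i] i by simp
  qed
qed


definition gam :: complex where "gam = (c - a) / (b - a)"

lemma Im_gam: "Im gam \<noteq> 0"
proof
  assume "Im gam = 0"
  then have "gam = of_real (Re gam)" by (simp add: complex_eq_iff)
  then have "c - a = of_real (Re gam) * (b - a)" unfolding gam_def using distinct_abc
    by (simp add: field_simps)
  then have "cr (c - a) (b - a) = cr (of_real (Re gam) * (b - a)) (b - a)" by simp
  also have "\<dots> = 0" by (simp add: cr_alt algebra_simps)
  finally show False using den_c by simp
qed

definition Fg :: "real \<Rightarrow> real" where
  "Fg s = pi/2 - arctan ((1 - s + s * Re gam) / (s * \<bar>Im gam\<bar>))"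

lemma Fg_pos: "Fg s > 0"
  using arctan_ubound[of "(1 - s + s * Re gam) / (s * \<bar>Im gam\<bar>)"] by (simp add: Fg_def)

lemma Fg_mono:
  assumes "0 < s1" "s1 < s2"
  shows "Fg s1 < Fg s2"
proof -
  have I: "\<bar>Im gam\<bar> > 0" using Im_gam by simp
  have e: "(1 - s + s * Re gam) / (s * \<bar>Im gam\<bar>) = 1 / (s * \<bar>Im gam\<bar>) + (Re gam - 1) / \<bar>Im gam\<bar>"
    if "s > 0" for s
    using that I by (simp add: field_simps)
  have "1 / (s2 * \<bar>Im gam\<bar>) < 1 / (s1 * \<bar>Im gam\<bar>)"
    using assms I by (simp add: frac_less2 divide_strict_left_mono mult_strict_right_mono)
  then have "arctan ((1 - s2 + s2 * Re gam) / (s2 * \<bar>Im gam\<bar>)) < arctan ((1 - s1 + s1 * Re gam) / (s1 * \<bar>Im gam\<bar>))"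
    using e assms by (simp add: arctan_less_iff)
  then show ?thesis by (simp add: Fg_def)
qed

lemma absArg_w:
  assumes "s > 0"
  shows "\<bar>Arg (1 - s + s * gam)\<bar> = Fg s"
proof -
  have im: "Im (1 - s + s * gam) = s * Im gam" by simp
  then have "Im (1 - s + s * gam) \<noteq> 0" using assms Im_gam by simp
  then show ?thesis using absArg im assms by (simp add: Fg_def abs_mult)
qed

lemma ang_osd:
  assumes "osd a z"
  shows "ang_coord a b c (z - a) = Fg (lam c z) / Fg 1"
proof -
  let ?s = "lam c z"
  have la: "lam a z = 0" using assms osd_lam0 by blast
  have s0: "?s > 0" using osd_pos[OF assms, of c] distinct_abc by auto
  have lb: "lam b z = 1 - ?s" using lam_sum[of z] la by simp
  have z: "z = (1 - ?s) *\<^sub>R b + ?s *\<^sub>R c" using lam_decomp[of z] la lb by simp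
  have ba: "b - a \<noteq> 0" using distinct_abc by simp
  have "(z - a) / (b - a) = 1 - of_real ?s + of_real ?s * gam"
    unfolding gam_def using ba by (subst z) (simp add: field_simps scaleR_conv_of_real)
  then have "\<bar>Arg ((z - a) / (b - a))\<bar> = Fg ?s" using absArg_w[OF s0] by simp
  moreover have "\<bar>Arg ((c - a) / (b - a))\<bar> = Fg 1"
    using absArg_w[of 1] unfolding gam_def by simp
  ultimately show ?thesis by (simp add: ang_coord_def)
qed

lemma osd_a_range: "osd a z \<Longrightarrow> 0 < lam c z \<and> lam c z < 1"
proof -
  assume o: "osd a z"
  have "lam b z > 0" "lam c z > 0" using osd_pos[OF o] distinct_abc by auto
  moreover have "lam a z = 0" using o osd_lam0 by blast
  ultimately show ?thesis using lam_sum[of z] by simp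
qed

lemma ang_range: "osd a z \<Longrightarrow> 0 < ang_coord a b c (z - a) \<and> ang_coord a b c (z - a) < 1"
  using ang_osd osd_a_range Fg_mono[of "lam c z" 1] Fg_pos by (simp add: field_simps)

lemma ang_mono: "osd a z1 \<Longrightarrow> osd a z2 \<Longrightarrow> lam c z1 < lam c z2 \<Longrightarrow>
   ang_coord a b c (z1 - a) < ang_coord a b c (z2 - a)"
  using ang_osd osd_a_range Fg_mono[of "lam c z1" "lam c z2"] Fg_pos[of 1]
  by (simp add: divide_strict_right_mono)


lemma lam_ext: "lam a z = lam a z' \<Longrightarrow> lam b z = lam b z' \<Longrightarrow> lam c z = lam c z' \<Longrightarrow> z = z'"
  using lam_decomp[of z] lam_decomp[of z'] by simp

lemma three_vv:
  assumes "V \<in> VV" "X \<in> VV" "Y \<in> VV" "V \<noteq> X" "V \<noteq> Y" "X \<noteq> Y"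
  shows "lam V z + lam X z + lam Y z = 1" "w \<in> VV \<Longrightarrow> w = V \<or> w = X \<or> w = Y"
proof -
  show "w \<in> VV \<Longrightarrow> w = V \<or> w = X \<or> w = Y" using assms by auto
  have "{V, X, Y} = VV" using assms by auto
  then consider "V = a" "X = b" "Y = c" | "V = a" "X = c" "Y = b" | "V = b" "X = a" "Y = c"
    | "V = b" "X = c" "Y = a" | "V = c" "X = a" "Y = b" | "V = c" "X = b" "Y = a"
    using assms distinct_abc by blast
  then show "lam V z + lam X z + lam Y z = 1" using lam_sum[of z] by cases (simp_all add: algebra_simps)
qed

lemma sig_mono:
  assumes "\<forall>i\<le>k. (\<sigma>::nat \<Rightarrow> real) i < \<sigma> (Suc i)" "i < j" "j \<le> Suc k"
  shows "\<sigma> i < \<sigma> j"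
  using assms(2,3)
proof (induction j)
  case 0 then show ?case by simp
next
  case (Suc j)
  then show ?case using assms(1) by (cases "i = j") (auto intro: less_trans)
qed

lemma ang_scale: "r > 0 \<Longrightarrow> ang_coord a b c (r *\<^sub>R w) = ang_coord a b c w"
proof -
  assume r: "r > 0"
  have h: "(r *\<^sub>R w) / (b - a) = (w / (b - a)) * of_real r" by (simp add: scaleR_conv_of_real)
  show ?thesis by (simp only: ang_coord_def h Arg_times_of_real2[OF r])
qed

lemma sameside:
  assumes gx: "gen_diag a b c zx k" and gy: "gen_diag a b c zy k" and eq: "tos zx k = tos zy k"
  shows "ang_coord a b c (zx ! 1 - a) = ang_coord a b c (zy ! 1 - a)"
proof -
  obtain sx where sx: "sx 0 = 0" "\<forall>i\<le>k. sx i < sx (Suc i)"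
    "\<forall>i\<le>k. Rf (take i (tos zx k)) (zx ! i) = a + sx i *\<^sub>R (zx ! 1 - a) \<and>
             Rf (take i (tos zx k)) (zx ! Suc i) = a + sx (Suc i) *\<^sub>R (zx ! 1 - a)"
    using traj_unfold[OF gx] by blast
  obtain sy where sy: "sy 0 = 0" "\<forall>i\<le>k. sy i < sy (Suc i)"
    "\<forall>i\<le>k. Rf (take i (tos zy k)) (zy ! i) = a + sy i *\<^sub>R (zy ! 1 - a) \<and>
             Rf (take i (tos zy k)) (zy ! Suc i) = a + sy (Suc i) *\<^sub>R (zy ! 1 - a)"
    using traj_unfold[OF gy] by blast
  have k1: "k \<ge> 1" using gd_basic(1)[OF gx] .
  have "opp (zx ! k) = opp (zy ! k)"
    using eq tos_nth[of "k - 1" k zx] tos_nth[of "k - 1" k zy] k1 by simp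
  then have E: "zx ! Suc k = zy ! Suc k" using gd_basic(7)[OF gx] gd_basic(7)[OF gy] by simp
  have px: "sx (Suc k) > 0" using sig_mono[OF sx(2), of 0 "Suc k"] sx(1) by simp
  have py: "sy (Suc k) > 0" using sig_mono[OF sy(2), of 0 "Suc k"] sy(1) by simp
  have "a + sx (Suc k) *\<^sub>R (zx ! 1 - a) = a + sy (Suc k) *\<^sub>R (zy ! 1 - a)"
    using sx(3) sy(3) eq E by (metis order_refl)
  then have h: "sx (Suc k) *\<^sub>R (zx ! 1 - a) = sy (Suc k) *\<^sub>R (zy ! 1 - a)"
    by (metis add_left_cancel)
  have "zx ! 1 - a = (1 / sx (Suc k)) *\<^sub>R (sx (Suc k) *\<^sub>R (zx ! 1 - a))" using px by simp
  also have "\<dots> = (1 / sx (Suc k)) *\<^sub>R (sy (Suc k) *\<^sub>R (zy ! 1 - a))" by (simp only: h)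
  also have "\<dots> = (sy (Suc k) / sx (Suc k)) *\<^sub>R (zy ! 1 - a)" by simp
  finally have "zx ! 1 - a = (sy (Suc k) / sx (Suc k)) *\<^sub>R (zy ! 1 - a)" .
  then show ?thesis using ang_scale px py by simp
qed


lemma lam_ext3:
  assumes "V \<in> VV" "X \<in> VV" "Y \<in> VV" "V \<noteq> X" "V \<noteq> Y" "X \<noteq> Y"
    and "lam V z = lam V z'" "lam X z = lam X z'" "lam Y z = lam Y z'"
  shows "z = z'"
proof -
  have "\<And>w. w \<in> VV \<Longrightarrow> lam w z = lam w z'"
    using three_vv(2)[OF assms(1-6)] assms(7-9) by blast
  then show ?thesis using lam_ext by simp
qed

lemma osd_comb:
  assumes "osd u z1" "osd u z2" "0 \<le> t" "t \<le> 1"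
  shows "osd u (z1 + t *\<^sub>R (z2 - z1))"
  unfolding osd_def lam_comb2
proof (intro conjI ballI impI)
  show "u \<in> VV" using assms(1) osd_V by blast
  show "(1 - t) * lam u z1 + t * lam u z2 = 0" using assms osd_lam0 by simp
  fix v assume v: "v \<in> VV" "v \<noteq> u"
  have "lam v z1 > 0" "lam v z2 > 0" using osd_pos assms(1,2) v by blast+
  then show "(1 - t) * lam v z1 + t * lam v z2 > 0" using assms(3,4)
    by (cases "t = 0") (auto intro: add_pos_nonneg add_nonneg_pos mult_pos_pos)
qed

lemma sp_sq_V: "u \<in> VV \<Longrightarrow> sp u \<in> VV \<and> sq u \<in> VV \<and> sp u \<noteq> u \<and> sq u \<noteq> u"
  using distinct_abc by (auto simp: sp_def sq_def)

lemma osd_seg: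
  assumes "osd u z" shows "z \<in> closed_segment (sp u) (sq u)"
proof -
  have u: "u \<in> VV" using assms osd_V by blast
  note S = sp_sq_V[OF u]
  have d: "sp u \<noteq> sq u" by (rule sp_sq_ne)
  let ?t = "lam (sq u) z"
  have vv: "lam u (sp u) = 0" "lam u (sq u) = 0" "lam (sq u) (sq u) = 1" "lam (sq u) (sp u) = 0"
    "lam (sp u) (sp u) = 1" "lam (sp u) (sq u) = 0"
    using lam_vv u S d by auto
  have e: "z = (1 - ?t) *\<^sub>R sp u + ?t *\<^sub>R sq u"
  proof (rule lam_ext3[of u "sp u" "sq u"])
    show "u \<in> VV" "sp u \<in> VV" "sq u \<in> VV" "u \<noteq> sp u" "u \<noteq> sq u" "sp u \<noteq> sq u" using u S d by auto
    show "lam u z = lam u ((1 - ?t) *\<^sub>R sp u + ?t *\<^sub>R sq u)"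
      unfolding lam_comb vv using assms osd_lam0 by simp
    show "lam (sq u) z = lam (sq u) ((1 - ?t) *\<^sub>R sp u + ?t *\<^sub>R sq u)"
      unfolding lam_comb vv by simp
    have "lam u z + lam (sp u) z + lam (sq u) z = 1"
      using three_vv(1)[of u "sp u" "sq u"] u S d by auto
    then show "lam (sp u) z = lam (sp u) ((1 - ?t) *\<^sub>R sp u + ?t *\<^sub>R sq u)"
      unfolding lam_comb vv using assms osd_lam0 by simp
  qed
  have "0 \<le> ?t" using assms S osd_pos by (metis less_imp_le osd_lam0 order_refl)
  moreover have "?t \<le> 1"
  proof -
    have "lam u z + lam (sp u) z + lam (sq u) z = 1"
      using three_vv(1)[of u "sp u" "sq u"] u S d by auto
    moreover have "lam (sp u) z > 0" using osd_pos[OF assms] S by blast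
    ultimately show ?thesis using assms osd_lam0 by simp
  qed
  ultimately show ?thesis using e unfolding in_segment by blast
qed

lemma osd_seg_int:
  assumes "osd u z" "z' \<in> tri a b c" "lam u z' > 0"
  shows "z \<noteq> z' \<and> open_segment z z' \<subseteq> interior (tri a b c)"
proof
  show "z \<noteq> z'" using assms osd_lam0 by force
  have u: "u \<in> VV" using assms osd_V by blast
  have "\<And>v. v \<in> VV \<Longrightarrow> lam v z > 0 \<or> lam v z' > 0"
    using osd_pos[OF assms(1)] assms(3) by blast
  then show "open_segment z z' \<subseteq> interior (tri a b c)"
    using seg_interior[OF osd_tri[OF assms(1)] assms(2)] by blast
qed

lemma diffside:
  assumes gx: "gen_diag a b c zx k" and gy: "gen_diag a b c zy k"
    and ne: "tos zx k \<noteq> tos zy k" and dne: "lam c (zx ! 1) \<noteq> lam c (zy ! 1)"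
  shows "\<exists>J ws. J < k \<and> gen_diag a b c ws J \<and>
     strictly_between (ang_coord a b c (ws ! 1 - a)) (ang_coord a b c (zx ! 1 - a)) (ang_coord a b c (zy ! 1 - a))"
proof -
  define osx where "osx = tos zx k"
  define osy where "osy = tos zy k"
  have lx: "length osx = k" and ly: "length osy = k" by (simp_all add: osx_def osy_def tos_len)
  have k1: "k \<ge> 1" using gd_basic(1)[OF gx] .
  have nx: "\<And>i. i < k \<Longrightarrow> osx ! i = opp (zx ! Suc i)" using tos_nth osx_def by simp
  have ny: "\<And>i. i < k \<Longrightarrow> osy ! i = opp (zy ! Suc i)" using tos_nth osy_def by simp
  have ex: "\<exists>i. i < k \<and> osx ! i \<noteq> osy ! i"
    using ne lx ly nth_equalityI unfolding osx_def[symmetric] osy_def[symmetric] by metis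
  define J where "J = (LEAST i. i < k \<and> osx ! i \<noteq> osy ! i)"
  have J: "J < k" "osx ! J \<noteq> osy ! J" using LeastI_ex[OF ex] unfolding J_def by auto
  have Jmin: "osx ! i = osy ! i" if "i < J" for i
  proof (rule ccontr)
    assume "osx ! i \<noteq> osy ! i"
    then have "J \<le> i" unfolding J_def using that J(1) by (intro Least_le) simp
    then show False using that by simp
  qed
  have J1: "J \<ge> 1"
  proof (rule ccontr)
    assume "\<not> J \<ge> 1"
    then have "J = 0" by simp
    then show False using J nx[of 0] ny[of 0] k1 gd_basic(5)[OF gx] gd_basic(5)[OF gy] by simp
  qed
  define cs where "cs = take J osx"
  have lcs: "length cs = J" using J lx by (simp add: cs_def)
  have csy: "take J osy = cs"
    unfolding cs_def by (rule nth_equalityI) (use J lx ly Jmin in simp_all)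
  have tkx: "take i osx = take i cs" if "i \<le> J" for i using that by (simp add: cs_def min_def)
  have tky: "take i osy = take i cs" if "i \<le> J" for i using that csy[symmetric] by (simp add: min_def)
  have oppeq: "opp (zx ! i) = opp (zy ! i)" if "1 \<le> i" "i \<le> J" for i
    using Jmin[of "i - 1"] nx[of "i - 1"] ny[of "i - 1"] that J(1) by simp
  have csn: "cs ! i = opp (zx ! Suc i)" if "i < J" for i using that J(1) nx by (simp add: cs_def)
  define V where "V = opp (zx ! J)"
  define ox where "ox = opp (zx ! Suc J)"
  define oy where "oy = opp (zy ! Suc J)"
  have oxJ: "osd V (zx ! J)" unfolding V_def using gd_basic(4)[OF gx, of J] J1 J by simp
  have oyJ: "osd V (zy ! J)" unfolding V_def oppeq[OF J1 order_refl] using gd_basic(4)[OF gy, of J] J1 J by simp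
  have ox1: "osd ox (zx ! Suc J)" unfolding ox_def using gd_basic(4)[OF gx, of "Suc J"] J by simp
  have oy1: "osd oy (zy ! Suc J)" unfolding oy_def using gd_basic(4)[OF gy, of "Suc J"] J by simp
  have xy: "ox \<noteq> oy" using J nx ny unfolding ox_def oy_def by simp
  have Vx: "V \<noteq> ox" using gd_basic(6)[OF gx, of J] J J1 unfolding V_def ox_def by simp
  have Vy: "V \<noteq> oy" using gd_basic(6)[OF gy, of J] J J1 oppeq[OF J1 order_refl] unfolding V_def oy_def by simp
  have VV3: "V \<in> VV" "ox \<in> VV" "oy \<in> VV" using oxJ ox1 oy1 osd_V by auto
  note sum3 = three_vv(1)[OF VV3 Vx Vy xy]
  obtain sx where sx: "sx 0 = 0" "\<forall>i\<le>k. sx i < sx (Suc i)"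
    "\<forall>i\<le>k. Rf (take i (tos zx k)) (zx ! i) = a + sx i *\<^sub>R (zx ! 1 - a) \<and>
             Rf (take i (tos zx k)) (zx ! Suc i) = a + sx (Suc i) *\<^sub>R (zx ! 1 - a)"
    using traj_unfold[OF gx] by blast
  obtain sy where sy: "sy 0 = 0" "\<forall>i\<le>k. sy i < sy (Suc i)"
    "\<forall>i\<le>k. Rf (take i (tos zy k)) (zy ! i) = a + sy i *\<^sub>R (zy ! 1 - a) \<and>
             Rf (take i (tos zy k)) (zy ! Suc i) = a + sy (Suc i) *\<^sub>R (zy ! 1 - a)"
    using traj_unfold[OF gy] by blast
  define dx where "dx = zx ! 1 - a"
  define dy where "dy = zy ! 1 - a"
  have Xx: "Rf (take i cs) (zx ! i) = a + sx i *\<^sub>R dx" if "i \<le> J" for i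
  proof -
    have "i \<le> k" using that J by simp
    then have "Rf (take i (tos zx k)) (zx ! i) = a + sx i *\<^sub>R (zx ! 1 - a)" using sx(3) by blast
    then show ?thesis using tkx[OF that] unfolding osx_def dx_def by simp
  qed
  have Xy: "Rf (take i cs) (zy ! i) = a + sy i *\<^sub>R dy" if "i \<le> J" for i
  proof -
    have "i \<le> k" using that J by simp
    then have "Rf (take i (tos zy k)) (zy ! i) = a + sy i *\<^sub>R (zy ! 1 - a)" using sy(3) by blast
    then show ?thesis using tky[OF that] unfolding osy_def dy_def by simp
  qed
  have cs_eq: "take J cs = cs" using lcs by simp
  have Xx1: "Rf cs (zx ! Suc J) = a + sx (Suc J) *\<^sub>R dx"
  proof -
    have "J \<le> k" using J by simp
    then have "Rf (take J (tos zx k)) (zx ! Suc J) = a + sx (Suc J) *\<^sub>R (zx ! 1 - a)" using sx(3) by blast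
    then show ?thesis using tkx[of J] cs_eq unfolding osx_def dx_def by simp
  qed
  have Xy1: "Rf cs (zy ! Suc J) = a + sy (Suc J) *\<^sub>R dy"
  proof -
    have "J \<le> k" using J by simp
    then have "Rf (take J (tos zy k)) (zy ! Suc J) = a + sy (Suc J) *\<^sub>R (zy ! 1 - a)" using sy(3) by blast
    then show ?thesis using tky[of J] cs_eq unfolding osy_def dy_def by simp
  qed
  have sxp: "sx i > 0" if "1 \<le> i" "i \<le> Suc k" for i using sig_mono[OF sx(2), of 0 i] sx(1) that by simp
  have syp: "sy i > 0" if "1 \<le> i" "i \<le> Suc k" for i using sig_mono[OF sy(2), of 0 i] sy(1) that by simp
  have sxm: "sx i < sx j" if "i < j" "j \<le> Suc k" for i j using sig_mono[OF sx(2)] that by blast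
  have sym: "sy i < sy j" if "i < j" "j \<le> Suc k" for i j using sig_mono[OF sy(2)] that by blast
  define mx where "mx = sx J / (sx (Suc J) - sx J)"
  define my where "my = sy J / (sy (Suc J) - sy J)"
  have mx0: "mx > 0" unfolding mx_def using sxp[of J] sxm[of J "Suc J"] J J1 by simp
  have my0: "my > 0" unfolding my_def using syp[of J] sym[of J "Suc J"] J J1 by simp
  define A where "A = zx ! J + (- mx) *\<^sub>R (zx ! Suc J - zx ! J)"
  define Ay where "Ay = zy ! J + (- my) *\<^sub>R (zy ! Suc J - zy ! J)"
  have RA: "Rf cs A = a"
  proof -
    have "Rf cs A = (a + sx J *\<^sub>R dx) + (- mx) *\<^sub>R ((a + sx (Suc J) *\<^sub>R dx) - (a + sx J *\<^sub>R dx))"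
      unfolding A_def Rf_aff Xx1 using Xx[of J] cs_eq by simp
    also have "\<dots> = a + (sx J - mx * (sx (Suc J) - sx J)) *\<^sub>R dx" by (simp add: algebra_simps)
    also have "sx J - mx * (sx (Suc J) - sx J) = 0"
      unfolding mx_def using sxm[of J "Suc J"] J by simp
    finally show ?thesis by simp
  qed
  have RAy: "Rf cs Ay = a"
  proof -
    have "Rf cs Ay = (a + sy J *\<^sub>R dy) + (- my) *\<^sub>R ((a + sy (Suc J) *\<^sub>R dy) - (a + sy J *\<^sub>R dy))"
      unfolding Ay_def Rf_aff Xy1 using Xy[of J] cs_eq by simp
    also have "\<dots> = a + (sy J - my * (sy (Suc J) - sy J)) *\<^sub>R dy" by (simp add: algebra_simps)
    also have "sy J - my * (sy (Suc J) - sy J) = 0"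
      unfolding my_def using sym[of J "Suc J"] J by simp
    finally show ?thesis by simp
  qed
  have AAy: "A = Ay" using RA RAy Rf_inj by metis
  have lA: "lam v A = (1 + mx) * lam v (zx ! J) - mx * lam v (zx ! Suc J)" for v
    unfolding A_def lam_comb2 by (simp add: algebra_simps)
  have lAy: "lam v A = (1 + my) * lam v (zy ! J) - my * lam v (zy ! Suc J)" for v
    unfolding AAy Ay_def lam_comb2 by (simp add: algebra_simps)
  have z1: "lam V (zx ! J) = 0" "lam V (zy ! J) = 0" "lam ox (zx ! Suc J) = 0" "lam oy (zy ! Suc J) = 0"
    using oxJ oyJ ox1 oy1 osd_lam0 by auto
  have p1: "lam V (zx ! Suc J) > 0" "lam oy (zx ! Suc J) > 0" "lam V (zy ! Suc J) > 0" "lam ox (zy ! Suc J) > 0"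
    using osd_pos[OF ox1, of V] osd_pos[OF ox1, of oy] osd_pos[OF oy1, of V] osd_pos[OF oy1, of ox]
      VV3 Vx Vy xy by auto
  have p2: "lam ox (zx ! J) > 0" "lam oy (zy ! J) > 0" "lam oy (zx ! J) > 0" "lam ox (zy ! J) > 0"
    using osd_pos[OF oxJ, of ox] osd_pos[OF oyJ, of oy] osd_pos[OF oxJ, of oy] osd_pos[OF oyJ, of ox]
      VV3 Vx Vy by auto
  have lt1: "lam V (zx ! Suc J) < 1" "lam V (zy ! Suc J) < 1"
    using sum3[of "zx ! Suc J"] sum3[of "zy ! Suc J"] z1 p1 by auto
  define al where "al = lam V A"
  have al_x: "al = - mx * lam V (zx ! Suc J)" unfolding al_def lA using z1 by simp
  have al_y: "al = - my * lam V (zy ! Suc J)" unfolding al_def lAy using z1 by simp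
  have al0: "al < 0" using al_x mx0 p1 by (simp add: mult_pos_pos)
  define tau where "tau = - al / (1 - al)"
  have tau: "0 < tau" "tau < 1" using al0 by (simp_all add: tau_def field_simps)
  have omt: "1 - tau = 1 / (1 - al)" using al0 by (simp add: tau_def field_simps)
  define W where "W = A + tau *\<^sub>R (V - A)"
  have lW: "lam v W = (1 - tau) * lam v A + tau * lam v V" for v
    unfolding W_def lam_comb2 by simp
  have lVV: "lam V V = 1" "lam ox V = 0" "lam oy V = 0" using lam_vv VV3 Vx Vy by auto
  have WV: "lam V W = 0" unfolding lW omt lVV al_def[symmetric] using al0
    by (simp add: tau_def field_simps)
  define fx where "fx = lam ox (zx ! J)"
  define fy where "fy = lam ox (zy ! J)"
  define fW where "fW = lam ox W"
  have fyo: "lam oy (zy ! J) = 1 - fy" using sum3[of "zy ! J"] z1 unfolding fy_def by simp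
  have fWo: "lam oy W = 1 - fW" using sum3[of W] WV unfolding fW_def by simp
  have fW_x: "fW = (1 + mx) * fx / (1 + mx * lam V (zx ! Suc J))"
    unfolding fW_def fx_def lW lVV omt lA using z1 al_x by simp
  have gW_y: "1 - fW = (1 + my) * (1 - fy) / (1 + my * lam V (zy ! Suc J))"
    unfolding fWo[symmetric] fyo[symmetric] lW lVV omt lAy using z1 al_y by simp
  have fx_lt: "fx < fW"
  proof -
    have "1 + mx * lam V (zx ! Suc J) < 1 + mx" using mx0 lt1 by simp
    moreover have "1 + mx * lam V (zx ! Suc J) > 0" using mx0 p1 by (simp add: add_pos_pos)
    moreover have "fx > 0" using p2 fx_def by simp
    ultimately show ?thesis unfolding fW_x by (simp add: field_simps)
  qed
  have fy_gt: "fW < fy"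
  proof -
    have "1 + my * lam V (zy ! Suc J) < 1 + my" using my0 lt1 by simp
    moreover have "1 + my * lam V (zy ! Suc J) > 0" using my0 p1 by (simp add: add_pos_pos)
    moreover have "1 - fy > 0" using p2 fyo by simp
    ultimately have "(1 - fy) * (1 + my * lam V (zy ! Suc J)) < (1 - fy) * (1 + my)"
      "1 + my * lam V (zy ! Suc J) > 0" by (simp_all add: mult_strict_left_mono)
    then have "1 - fy < 1 - fW" unfolding gW_y by (simp add: pos_less_divide_eq mult.commute)
    then show ?thesis by simp
  qed
  define lm where "lm = (fW - fx) / (fy - fx)"
  have lm: "0 < lm" "lm < 1" using fx_lt fy_gt by (simp_all add: lm_def field_simps)
  have Weq: "W = zx ! J + lm *\<^sub>R (zy ! J - zx ! J)"
  proof (rule lam_ext3[OF VV3 Vx Vy xy])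
    show "lam V W = lam V (zx ! J + lm *\<^sub>R (zy ! J - zx ! J))" unfolding lam_comb2 WV z1 by simp
    show ox: "lam ox W = lam ox (zx ! J + lm *\<^sub>R (zy ! J - zx ! J))"
    proof -
      have "(1 - lm) * fx + lm * fy = fx + lm * (fy - fx)" by (simp add: algebra_simps)
      also have "lm * (fy - fx) = fW - fx" using fx_lt fy_gt by (simp add: lm_def)
      finally show ?thesis unfolding lam_comb2 fW_def[symmetric] fx_def[symmetric] fy_def[symmetric] by simp
    qed
    show "lam oy W = lam oy (zx ! J + lm *\<^sub>R (zy ! J - zx ! J))"
      using sum3[of W] sum3[of "zx ! J + lm *\<^sub>R (zy ! J - zx ! J)"] ox
      unfolding lam_comb2 WV z1 by simp
  qed
  define e where "e = ((1 - lm) * sx J) *\<^sub>R dx + (lm * sy J) *\<^sub>R dy"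
  have RW: "Rf cs W = a + e"
  proof -
    have "Rf cs W = (a + sx J *\<^sub>R dx) + lm *\<^sub>R ((a + sy J *\<^sub>R dy) - (a + sx J *\<^sub>R dx))"
      unfolding Weq Rf_aff using Xx[of J] Xy[of J] cs_eq by simp
    then show ?thesis by (simp add: e_def algebra_simps)
  qed
  have RV: "Rf cs V = a + (1 / tau) *\<^sub>R e"
  proof -
    have h: "((1 - tau) / tau) *\<^sub>R (W - A) = (1 - tau) *\<^sub>R (V - A)"
      unfolding W_def using tau by simp
    have "V = W + ((1 - tau) / tau) *\<^sub>R (W - A)"
      unfolding h unfolding W_def by (simp add: algebra_simps)
    then have "Rf cs V = Rf cs W + ((1 - tau) / tau) *\<^sub>R (Rf cs W - Rf cs A)"
      using Rf_aff by metis
    also have "\<dots> = a + (1 + (1 - tau) / tau) *\<^sub>R e" unfolding RW RA by (simp add: algebra_simps)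
    also have "1 + (1 - tau) / tau = 1 / tau" using tau by (simp add: field_simps)
    finally show ?thesis .
  qed
  define Dn where "Dn i = (1 - lm) * sx J / sx i + lm * sy J / sy i" for i
  define kap where "kap i = (if i = 0 then 0 else if i \<le> J then 1 / Dn i else 1 / tau)" for i
  define li where "li i = kap i * lm * sy J / sy i" for i
  define w where "w i = (if i = 0 then a else if i \<le> J then zx ! i + li i *\<^sub>R (zy ! i - zx ! i) else V)" for i
  have sxJ: "sx J > 0" "sy J > 0" using sxp[of J] syp[of J] J1 J by auto
  have sxi: "sx i > 0" "sy i > 0" if "1 \<le> i" "i \<le> J" for i using sxp[of i] syp[of i] that J by auto
  have Dn_pos: "Dn i > 0" if "1 \<le> i" "i \<le> J" for i
    unfolding Dn_def using sxi[OF that] sxJ lm by (intro add_pos_pos) (simp_all add: divide_pos_pos)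
  have DnJ: "Dn J = 1" unfolding Dn_def using sxJ by simp
  have kapJ: "kap J = 1" unfolding kap_def DnJ using J1 by simp
  have liJ: "li J = lm" unfolding li_def kapJ using sxJ by simp
  have wJ: "w J = W" unfolding w_def liJ Weq using J1 by simp
  have wS: "w (Suc J) = V" unfolding w_def by simp
  have li_eqs: "(1 - li i) * sx i = kap i * ((1 - lm) * sx J)" "li i * sy i = kap i * (lm * sy J)"
    if "1 \<le> i" "i \<le> J" for i
  proof -
    have D: "Dn i > 0" using Dn_pos[OF that] .
    have k: "kap i = 1 / Dn i" unfolding kap_def using that by simp
    show "li i * sy i = kap i * (lm * sy J)" unfolding li_def using sxi[OF that] by simp
    have liQ: "li i = (lm * sy J / sy i) / Dn i" unfolding li_def k by simp
    have h1: "1 - li i = (Dn i - lm * sy J / sy i) / Dn i" unfolding liQ using D by (simp add: field_simps)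
    have h2: "Dn i - lm * sy J / sy i = (1 - lm) * sx J / sx i" by (simp add: Dn_def)
    have "1 - li i = ((1 - lm) * sx J / sx i) / Dn i" unfolding h1 h2 ..
    then show "(1 - li i) * sx i = kap i * ((1 - lm) * sx J)" unfolding k using sxi[OF that] by simp
  qed
  have li_rng: "0 < li i \<and> li i < 1" if "1 \<le> i" "i \<le> J" for i
  proof -
    have kp: "kap i > 0" unfolding kap_def using that Dn_pos[OF that] by simp
    have "li i * sy i > 0" unfolding li_eqs(2)[OF that] using kp lm sxJ by simp
    then have "li i > 0" using sxi[OF that] by (simp add: zero_less_mult_iff)
    moreover have "(1 - li i) * sx i > 0" unfolding li_eqs(1)[OF that] using kp lm sxJ by simp
    then have "1 - li i > 0" using sxi[OF that] by (simp add: zero_less_mult_iff)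
    ultimately show ?thesis by simp
  qed
  have Rw: "Rf (take i cs) (w i) = a + kap i *\<^sub>R e" if "i \<le> J" for i
  proof (cases "i = 0")
    case True then show ?thesis by (simp add: w_def kap_def)
  next
    case False
    then have i1: "1 \<le> i" by simp
    have "Rf (take i cs) (w i) = (a + sx i *\<^sub>R dx) + li i *\<^sub>R ((a + sy i *\<^sub>R dy) - (a + sx i *\<^sub>R dx))"
      unfolding w_def using False that Rf_aff Xx[OF that] Xy[OF that] by simp
    also have "\<dots> = a + ((1 - li i) * sx i) *\<^sub>R dx + (li i * sy i) *\<^sub>R dy" by (simp add: algebra_simps)
    also have "\<dots> = a + kap i *\<^sub>R e" unfolding li_eqs[OF i1 that] e_def by (simp add: algebra_simps)
    finally show ?thesis .
  qed
  have osd_w: "osd (opp (zx ! i)) (w i)" if "1 \<le> i" "i \<le> J" for i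
  proof -
    have o1: "osd (opp (zx ! i)) (zx ! i)" using gd_basic(4)[OF gx, of i] that J by simp
    have o2: "osd (opp (zx ! i)) (zy ! i)" using gd_basic(4)[OF gy, of i] that J oppeq[OF that] by simp
    show ?thesis unfolding w_def using that osd_comb[OF o1 o2, of "li i"] li_rng[OF that] by simp
  qed
  have Nw: "Rf (take i cs) (w (Suc i)) = a + kap (Suc i) *\<^sub>R e" if "i \<le> J" for i
  proof (cases "i = J")
    case True
    then show ?thesis using RV cs_eq wS by (simp add: kap_def)
  next
    case False
    then have i: "i < J" using that by simp
    have o: "osd (opp (zx ! Suc i)) (w (Suc i))" using osd_w[of "Suc i"] i by simp
    have tk: "take (Suc i) cs = take i cs @ [opp (zx ! Suc i)]"
      using i lcs csn by (simp add: take_Suc_conv_app_nth)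
    have "Rf (take i cs) (w (Suc i)) = Rf (take (Suc i) cs) (w (Suc i))"
      unfolding tk by (rule Rf_fix[OF osd_V[OF o] osd_lam0[OF o], symmetric])
    then show ?thesis using Rw[of "Suc i"] i by simp
  qed
  have kap_mono: "kap i < kap (Suc i)" if iJ: "i \<le> J" for i
  proof -
    consider "i = 0" | "1 \<le> i" "i < J" | "i = J" using iJ by (cases "i = 0"; cases "i = J") auto
    then show ?thesis
    proof cases
      case 1
      then show ?thesis unfolding kap_def using Dn_pos[of 1] J1 by simp
    next
      case 2
      have "Dn (Suc i) < Dn i"
      proof -
        have "(1 - lm) * sx J / sx (Suc i) < (1 - lm) * sx J / sx i"
          using sxi[of i] sxm[of i "Suc i"] 2 J lm sxJ
          by (intro divide_strict_left_mono) (simp_all add: mult_pos_pos)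
        moreover have "lm * sy J / sy (Suc i) < lm * sy J / sy i"
          using sxi[of i] sym[of i "Suc i"] 2 J lm sxJ
          by (intro divide_strict_left_mono) (simp_all add: mult_pos_pos)
        ultimately show ?thesis unfolding Dn_def by simp
      qed
      then show ?thesis unfolding kap_def using 2 Dn_pos[of "Suc i"]
        by (simp add: frac_less2)
    next
      case 3
      have ks: "kap (Suc J) = 1 / tau" by (simp add: kap_def)
      have "1 < 1 / tau" using tau by (simp add: field_simps)
      then show ?thesis using 3 kapJ ks by simp
    qed
  qed
  have refl_w: "reflects_at a b c (w (i - 1)) (w i) (w (Suc i))" if "1 \<le> i" "i \<le> J" for i
  proof -
    let ?o = "opp (zx ! i)"
    have o: "osd ?o (w i)" using osd_w[OF that] .
    define t where "t = (kap (Suc i) - kap i) / (kap i - kap (i - 1))"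
    have t0: "t > 0" unfolding t_def using kap_mono[of i] kap_mono[of "i - 1"] that by simp
    have tk: "take i cs = take (i - 1) cs @ [?o]"
      using that lcs csn[of "i - 1"] take_Suc_conv_app_nth[of "i - 1" cs] by simp
    define z' where "z' = w i + of_real t * rh ?o * cnj (w i - w (i - 1))"
    have "Rf (take i cs) z' - Rf (take i cs) (w i) = t *\<^sub>R (Rf (take (i - 1) cs) (w i) - Rf (take (i - 1) cs) (w (i - 1)))"
      unfolding tk z'_def by (rule Rf_law[OF osd_V[OF o] osd_lam0[OF o]])
    also have "Rf (take (i - 1) cs) (w i) = a + kap i *\<^sub>R e" using Nw[of "i - 1"] that by simp
    also have "Rf (take (i - 1) cs) (w (i - 1)) = a + kap (i - 1) *\<^sub>R e" using Rw[of "i - 1"] that by simp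
    also have "t *\<^sub>R ((a + kap i *\<^sub>R e) - (a + kap (i - 1) *\<^sub>R e)) = (t * (kap i - kap (i - 1))) *\<^sub>R e"
      by (simp add: algebra_simps)
    also have "t * (kap i - kap (i - 1)) = kap (Suc i) - kap i"
    proof -
      have "kap (i - 1) < kap i" using kap_mono[of "i - 1"] that by simp
      then show ?thesis unfolding t_def by simp
    qed
    also have "(kap (Suc i) - kap i) *\<^sub>R e = Rf (take i cs) (w (Suc i)) - Rf (take i cs) (w i)"
      using Nw[OF that(2)] Rw[OF that(2)] by (simp add: algebra_simps)
    finally have "Rf (take i cs) z' = Rf (take i cs) (w (Suc i))" by simp
    then have zw: "z' = w (Suc i)" by (rule Rf_inj)
    show ?thesis unfolding reflects_at_def
    proof (intro exI conjI)
      show "sp ?o \<in> VV" "sq ?o \<in> VV" using sp_sq_V osd_V[OF o] by auto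
      show "sp ?o \<noteq> sq ?o" by (rule sp_sq_ne)
      show "w i \<in> closed_segment (sp ?o) (sq ?o)" by (rule osd_seg[OF o])
      show "t > 0" by (rule t0)
      show "w (Suc i) - w i = of_real t * ((sq ?o - sp ?o) / cnj (sq ?o - sp ?o)) * cnj (w i - w (i - 1))"
        unfolding zw[symmetric] z'_def rh_def by simp
    qed
  qed
  have seg_w: "w i \<noteq> w (Suc i) \<and> open_segment (w i) (w (Suc i)) \<subseteq> interior (tri a b c)" if iJ: "i \<le> J" for i
  proof -
    consider "i = 0" | "1 \<le> i" "i < J" | "i = J" using iJ by (cases "i = 0"; cases "i = J") auto
    then show ?thesis
    proof cases
      case 1
      have o: "osd a (w 1)" using osd_w[of 1] J1 gd_basic(5)[OF gx] by simp
      have "a \<in> tri a b c" unfolding in_tri using lam_vert by simp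
      then have "w 1 \<noteq> a \<and> open_segment (w 1) a \<subseteq> interior (tri a b c)"
        using osd_seg_int[OF o] lam_vert by simp
      moreover have "w 0 = a" by (simp add: w_def)
      ultimately show ?thesis using 1 by (metis One_nat_def open_segment_commute)
    next
      case 2
      have o1: "osd (opp (zx ! i)) (w i)" using osd_w 2 by simp
      have o2: "osd (opp (zx ! Suc i)) (w (Suc i))" using osd_w[of "Suc i"] 2 by simp
      have ne: "opp (zx ! Suc i) \<noteq> opp (zx ! i)" using gd_basic(6)[OF gx, of i] 2 J by simp
      have "lam (opp (zx ! i)) (w (Suc i)) > 0" using osd_pos[OF o2 osd_V[OF o1]] ne by simp
      then show ?thesis using osd_seg_int[OF o1 osd_tri[OF o2]] by simp
    next
      case 3
      have o1: "osd V (w J)" using osd_w[of J] J1 unfolding V_def by simp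
      have "V \<in> tri a b c" unfolding in_tri using lam_vv VV3 by auto
      then show ?thesis using osd_seg_int[OF o1, of V] lVV 3 wS by simp
    qed
  qed
  define ws where "ws = map w [0..<J+2]"
  have wsn: "ws ! i = w i" if "i < J + 2" for i unfolding ws_def using that by (simp del: upt_Suc)
  have gdw: "gen_diag a b c ws J"
    unfolding gen_diag_def
  proof (intro conjI ballI allI impI)
    show "length ws = J + 2" by (simp add: ws_def)
    show "ws ! 0 = a" using wsn[of 0] by (simp add: w_def)
    show "ws ! (J + 1) \<in> VV" using wsn[of "J + 1"] wS VV3 by simp
    fix i
    assume i: "i \<le> J"
    show "ws ! i \<noteq> ws ! Suc i" using seg_w[OF i] wsn[of i] wsn[of "Suc i"] i by simp
    show "open_segment (ws ! i) (ws ! Suc i) \<subseteq> interior (tri a b c)"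
      using seg_w[OF i] wsn[of i] wsn[of "Suc i"] i by simp
  next
    fix i assume i: "i \<in> {1..J}"
    then have i1: "1 \<le> i" "i \<le> J" by auto
    show "ws ! i \<in> frontier (tri a b c) - VV" using fr_osd osd_w[OF i1] wsn[of i] i1 by auto
    show "reflects_at a b c (ws ! (i - 1)) (ws ! i) (ws ! Suc i)"
      using refl_w[OF i1] wsn[of i] wsn[of "i - 1"] wsn[of "Suc i"] i1 by simp
  qed
  have ox1': "osd a (zx ! 1)" using gd_basic(4)[OF gx, of 1] gd_basic(5)[OF gx] k1 by simp
  have oy1': "osd a (zy ! 1)" using gd_basic(4)[OF gy, of 1] gd_basic(5)[OF gy] k1 by simp
  have ow1: "osd a (w 1)" using osd_w[of 1] J1 gd_basic(5)[OF gx] by simp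
  have w1: "w 1 = zx ! 1 + li 1 *\<^sub>R (zy ! 1 - zx ! 1)" using J1 by (simp add: w_def)
  have l1: "0 < li 1" "li 1 < 1" using li_rng[of 1] J1 by auto
  have lc: "lam c (w 1) = (1 - li 1) * lam c (zx ! 1) + li 1 * lam c (zy ! 1)"
    unfolding w1 lam_comb2 ..
  have sb: "strictly_between (ang_coord a b c (w 1 - a)) (ang_coord a b c (zx ! 1 - a)) (ang_coord a b c (zy ! 1 - a))"
  proof (cases "lam c (zx ! 1) < lam c (zy ! 1)")
    case True
    have "lam c (zx ! 1) < lam c (w 1)" "lam c (w 1) < lam c (zy ! 1)"
      unfolding lc using conv_between[OF True l1] by simp_all
    then show ?thesis unfolding strictly_between_def
      using ang_mono[OF ox1' ow1] ang_mono[OF ow1 oy1'] by simp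
  next
    case False
    then have F: "lam c (zy ! 1) < lam c (zx ! 1)" using dne by simp
    have "lam c (zy ! 1) < lam c (w 1)" "lam c (w 1) < lam c (zx ! 1)"
      unfolding lc using conv_between'[OF F l1] by simp_all
    then show ?thesis unfolding strictly_between_def
      using ang_mono[OF oy1' ow1] ang_mono[OF ow1 ox1'] by simp
  qed
  show ?thesis
    using gdw sb J(1) wsn[of 1] by (intro exI[of _ J] exI[of _ ws]) simp
qed


abbreviation "CP m \<equiv> cut_points a b c m"

lemma has_index_range: "has_index a b c x p \<Longrightarrow> 0 < x \<and> x < 1"
proof -
  assume "has_index a b c x p"
  then obtain zs where zs: "gen_diag a b c zs p" "x = ang_coord a b c (zs ! 1 - a)"
    unfolding has_index_def by blast
  have "osd a (zs ! 1)" using gd_basic(4)[OF zs(1), of 1] gd_basic(5)[OF zs(1)] gd_basic(1)[OF zs(1)] by simp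
  then show ?thesis using ang_range zs(2) by simp
qed

lemma cut_range: "x \<in> CP m \<Longrightarrow> 0 < x \<and> x < 1"
  unfolding cut_points_def using has_index_range by blast

lemma CP_mono: "m \<le> m' \<Longrightarrow> CP m \<subseteq> CP m'"
  unfolding cut_points_def using le_trans by blast

lemma has_index_CP: "has_index a b c x p \<Longrightarrow> p \<le> m \<Longrightarrow> x \<in> CP m"
  unfolding cut_points_def by auto

lemma gapB:
  assumes hx: "has_index a b c x (Suc m)" and hy: "has_index a b c y (Suc m)" and xy: "x < y"
  shows "\<exists>z\<in>CP m. x < z \<and> z < y"
proof -
  obtain zx where zx: "gen_diag a b c zx (Suc m)" "x = ang_coord a b c (zx ! 1 - a)"
    using hx unfolding has_index_def by blast
  obtain zy where zy: "gen_diag a b c zy (Suc m)" "y = ang_coord a b c (zy ! 1 - a)"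
    using hy unfolding has_index_def by blast
  have ne: "tos zx (Suc m) \<noteq> tos zy (Suc m)"
    using sameside[OF zx(1) zy(1)] zx(2) zy(2) xy by auto
  have ox: "osd a (zx ! 1)" using gd_basic(4)[OF zx(1), of 1] gd_basic(5)[OF zx(1)] by simp
  have oy: "osd a (zy ! 1)" using gd_basic(4)[OF zy(1), of 1] gd_basic(5)[OF zy(1)] by simp
  have dne: "lam c (zx ! 1) \<noteq> lam c (zy ! 1)"
  proof
    assume eq: "lam c (zx ! 1) = lam c (zy ! 1)"
    have "lam a (zx ! 1) = 0" "lam a (zy ! 1) = 0" using ox oy osd_lam0 by auto
    moreover then have "lam b (zx ! 1) = lam b (zy ! 1)"
      using lam_sum[of "zx ! 1"] lam_sum[of "zy ! 1"] eq by simp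
    ultimately have "zx ! 1 = zy ! 1" using lam_ext eq by simp
    then show False using zx(2) zy(2) xy by simp
  qed
  obtain J ws where J: "J < Suc m" "gen_diag a b c ws J"
    "strictly_between (ang_coord a b c (ws ! 1 - a)) (ang_coord a b c (zx ! 1 - a)) (ang_coord a b c (zy ! 1 - a))"
    using diffside[OF zx(1) zy(1) ne dne] by blast
  let ?z = "ang_coord a b c (ws ! 1 - a)"
  have "has_index a b c ?z J" unfolding has_index_def using J(2) by blast
  then have "?z \<in> CP m" using J(1) has_index_CP by simp
  moreover have "x < ?z \<and> ?z < y" using J(3) xy zx(2) zy(2) unfolding strictly_between_def by simp
  ultimately show ?thesis by blast
qed

end




locale CB =
  fixes hi :: "real \<Rightarrow> nat \<Rightarrow> bool"
  assumes rngA: "hi x p \<Longrightarrow> 0 < x \<and> x < 1"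
    and gB: "hi x (Suc m) \<Longrightarrow> hi y (Suc m) \<Longrightarrow> x < y \<Longrightarrow> \<exists>z. (\<exists>p\<le>m. hi z p) \<and> x < z \<and> z < y"
begin

definition Cs :: "nat \<Rightarrow> real set" where "Cs m = {x. \<exists>p\<le>m. hi x p}"

definition gp :: "real \<Rightarrow> nat \<Rightarrow> real \<Rightarrow> nat \<Rightarrow> real \<Rightarrow> nat \<Rightarrow> bool" where
  "gp xp p xq q xr r \<longleftrightarrow> hi xp p \<and> hi xq q \<and> hi xr r \<and> p < q \<and> q < r \<and>
     strictly_between xr xp xq \<and> (\<forall>y\<in>Cs r. strictly_between y xp xq \<longrightarrow> y = xr)"

lemma Cs_mono: "m \<le> m' \<Longrightarrow> Cs m \<subseteq> Cs m'"
  unfolding Cs_def using le_trans by blast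

lemma Cs_I: "hi x p \<Longrightarrow> p \<le> m \<Longrightarrow> x \<in> Cs m"
  unfolding Cs_def by blast

lemma gB': "hi x (Suc m) \<Longrightarrow> hi y (Suc m) \<Longrightarrow> x < y \<Longrightarrow> \<exists>z\<in>Cs m. x < z \<and> z < y"
  using gB unfolding Cs_def by blast

lemma sb_sym: "strictly_between y u v = strictly_between y v u"
  unfolding strictly_between_def by (simp add: min.commute max.commute)

lemma GT:
  fixes lo up :: real
  assumes fin: "finite (Cs (n + k))"
    and noO: "\<forall>y\<in>Cs n. \<not> (lo < y \<and> y < up)"
    and r: "n < r" "r \<le> n + k"
    and x: "lo < x" "x < up" "hi x r" "x \<notin> Cs (r - 1)"
    and z1: "z1 \<in> Cs (r - 1)" "lo < z1" "z1 < x"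
    and z2: "z2 \<in> Cs (r - 1)" "x < z2" "z2 < up"
  shows "\<exists>u p v q. gp u p v q x r \<and> p \<in> {n+1..n+k} \<and> q \<in> {n+1..n+k} \<and>
           lo < u \<and> u < up \<and> lo < v \<and> v < up"
proof -
  have finr: "finite (Cs (r - 1))" using finite_subset[OF Cs_mono fin] r by simp
  define S1 where "S1 = {z \<in> Cs (r - 1). z < x}"
  define S2 where "S2 = {z \<in> Cs (r - 1). x < z}"
  have fS: "finite S1" "finite S2" using finr by (simp_all add: S1_def S2_def)
  have nS: "z1 \<in> S1" "z2 \<in> S2" using z1 z2 by (simp_all add: S1_def S2_def)
  define u where "u = Max S1"
  define v where "v = Min S2"
  have uS: "u \<in> S1" unfolding u_def using fS nS Max_in by blast
  have vS: "v \<in> S2" unfolding v_def using fS nS Min_in by blast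
  have u_ge: "z1 \<le> u" unfolding u_def using fS nS by simp
  have v_le: "v \<le> z2" unfolding v_def using fS nS by simp
  have u: "u \<in> Cs (r - 1)" "u < x" using uS by (auto simp: S1_def)
  have v: "v \<in> Cs (r - 1)" "x < v" using vS by (auto simp: S2_def)
  have gap: False if "y \<in> Cs (r - 1)" "u < y" "y < v" for y
  proof -
    consider "y < x" | "y = x" | "x < y" by linarith
    then show False
    proof cases
      case 1 then have "y \<in> S1" using that by (simp add: S1_def)
      then have "y \<le> u" unfolding u_def using fS by simp
      then show False using that by simp
    next
      case 2 then show False using that x by simp
    next
      case 3 then have "y \<in> S2" using that by (simp add: S2_def)
      then have "v \<le> y" unfolding v_def using fS by simp
      then show False using that by simp
    qed
  qed
  have ulo: "lo < u" "u < up" using u_ge z1 u x by auto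
  have vlo: "lo < v" "v < up" using v_le z2 v x by auto
  obtain p where p: "p \<le> r - 1" "hi u p" using u(1) unfolding Cs_def by blast
  obtain q where q: "q \<le> r - 1" "hi v q" using v(1) unfolding Cs_def by blast
  have pn: "n < p"
  proof (rule ccontr)
    assume "\<not> n < p"
    then have "u \<in> Cs n" using p Cs_I by simp
    then show False using noO ulo by blast
  qed
  have qn: "n < q"
  proof (rule ccontr)
    assume "\<not> n < q"
    then have "v \<in> Cs n" using q Cs_I by simp
    then show False using noO vlo by blast
  qed
  have pq: "p \<noteq> q"
  proof
    assume "p = q"
    then have h1: "hi u (Suc (p - 1))" and h2: "hi v (Suc (p - 1))" using p q pn by simp_all
    have uv: "u < v" using u v by simp
    obtain z where "z \<in> Cs (p - 1)" "u < z" "z < v" using gB'[OF h1 h2 uv] by blast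
    moreover have "Cs (p - 1) \<subseteq> Cs (r - 1)" using p by (intro Cs_mono) simp
    ultimately show False using gap by blast
  qed
  have rr: "r = Suc (r - 1)" using r by simp
  have only: "y = x" if yC: "y \<in> Cs r" and ysb: "strictly_between y u v" for y
  proof -
    have uv: "u < v" using u(2) v(2) by simp
    then have mm: "min u v = u" "max u v = v" by simp_all
    have yuv: "u < y" "y < v" using ysb unfolding strictly_between_def mm by simp_all
    obtain s where s: "s \<le> r" "hi y s" using yC unfolding Cs_def by blast
    have "s = r"
    proof (rule ccontr)
      assume "s \<noteq> r"
      then have "y \<in> Cs (r - 1)" using s Cs_I by simp
      then show False using gap yuv by blast
    qed
    show "y = x"
    proof (rule ccontr)
      assume ne: "y \<noteq> x"
      have hy: "hi y (Suc (r - 1))" "hi x (Suc (r - 1))" using s \<open>s = r\<close> x(3) rr[symmetric] by simp_all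
      consider "y < x" | "x < y" using ne by linarith
      then show False
      proof cases
        case 1
        then obtain z where "z \<in> Cs (r - 1)" "y < z" "z < x" using gB'[OF hy] by blast
        then show False using gap[of z] yuv v(2) by simp
      next
        case 2
        then obtain z where "z \<in> Cs (r - 1)" "x < z" "z < y" using gB'[OF hy(2,1)] by blast
        then show False using gap[of z] yuv u(2) by simp
      qed
    qed
  qed
  have sbx: "strictly_between x u v" using u v unfolding strictly_between_def by simp
  have ranges: "p \<in> {n+1..n+k}" "q \<in> {n+1..n+k}" using p q pn qn r by auto
  show ?thesis
  proof (cases "p < q")
    case True
    have "q < r" using q(1) r(1) by simp
    then have "gp u p v q x r" unfolding gp_def using p(2) q(2) True x(3) sbx only by blast
    then show ?thesis using ranges ulo vlo by blast
  next
    case False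
    then have "q < p" using pq by simp
    have "p < r" using p(1) r(1) by simp
    moreover have "strictly_between x v u" using sbx sb_sym by blast
    moreover have "\<forall>y\<in>Cs r. strictly_between y v u \<longrightarrow> y = x" using only sb_sym by blast
    ultimately have "gp v q u p x r" unfolding gp_def using p(2) q(2) \<open>q < p\<close> x(3) by blast
    then show ?thesis using ranges ulo vlo by blast
  qed
qed


lemma three_elems:
  fixes S :: "real set"
  assumes fS: "finite S" and c3: "card S \<ge> 3"
  shows "\<exists>x1 x2 x3. x1 \<in> S \<and> x2 \<in> S \<and> x3 \<in> S \<and> x1 < x2 \<and> x2 < x3"
proof -
  have ne: "S \<noteq> {}" using c3 by auto
  have mM: "Min S \<in> S" "Max S \<in> S" using fS ne by simp_all
  have sub: "{Min S, Max S} \<subseteq> S" using mM by simp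
  have "card (S - {Min S, Max S}) = card S - card {Min S, Max S}"
    by (rule card_Diff_subset[OF _ sub]) simp
  moreover have "card {Min S, Max S} \<le> 2" by (simp add: card_insert_if)
  ultimately have c1: "card (S - {Min S, Max S}) \<ge> 1" using c3 by linarith
  have "S - {Min S, Max S} \<noteq> {}"
  proof
    assume e: "S - {Min S, Max S} = {}"
    have "card (S - {Min S, Max S}) = 0" unfolding e by simp
    then show False using c1 by simp
  qed
  then obtain x2 where x2: "x2 \<in> S" "x2 \<noteq> Min S" "x2 \<noteq> Max S" by blast
  have "Min S \<le> x2" "x2 \<le> Max S" using x2 fS by simp_all
  then have "Min S < x2" "x2 < Max S" using x2 by simp_all
  then show ?thesis using x2(1) mM by blast
qed

definition GoodIn :: "nat \<Rightarrow> nat \<Rightarrow> real \<Rightarrow> real \<Rightarrow> bool" where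
  "GoodIn n k lo up \<longleftrightarrow> (\<exists>u p v q x r. gp u p v q x r \<and> p \<in> {n+1..n+k} \<and> q \<in> {n+1..n+k} \<and> r \<in> {n+1..n+k} \<and>
      lo < u \<and> u < up \<and> lo < v \<and> v < up \<and> lo < x \<and> x < up)"

lemma PL:
  fixes lo up :: real
  assumes fin: "finite (Cs (n + k))"
    and noO: "\<forall>y\<in>Cs n. \<not> (lo < y \<and> y < up)"
    and r: "n < r" "r \<le> n + k"
    and ng: "\<not> GoodIn n k lo up"
  shows "card {x. lo < x \<and> x < up \<and> hi x r \<and> x \<notin> Cs (r - 1)} \<le> 2"
proof (rule ccontr)
  let ?A = "{x. lo < x \<and> x < up \<and> hi x r \<and> x \<notin> Cs (r - 1)}"
  assume "\<not> card ?A \<le> 2"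
  then have c3: "card ?A \<ge> 3" by simp
  have "?A \<subseteq> Cs (n + k)" using r Cs_I by auto
  then have finA: "finite ?A" using fin finite_subset by blast
  obtain x1 x2 x3 where xs: "x1 \<in> ?A" "x2 \<in> ?A" "x3 \<in> ?A" "x1 < x2" "x2 < x3"
    using three_elems[OF finA c3] by blast
  have rr: "Suc (r - 1) = r" using r by simp
  have h: "hi x1 (Suc (r - 1))" "hi x2 (Suc (r - 1))" "hi x3 (Suc (r - 1))" using xs rr by auto
  obtain z1 where z1: "z1 \<in> Cs (r - 1)" "x1 < z1" "z1 < x2" using gB'[OF h(1,2) xs(4)] by blast
  obtain z2 where z2: "z2 \<in> Cs (r - 1)" "x2 < z2" "z2 < x3" using gB'[OF h(2,3) xs(5)] by blast
  have "lo < x1" "x3 < up" using xs by auto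
  then have "lo < z1" "z2 < up" using z1 z2 by auto
  then obtain u p v q where "gp u p v q x2 r" "p \<in> {n+1..n+k}" "q \<in> {n+1..n+k}"
      "lo < u" "u < up" "lo < v" "v < up"
    using GT[OF fin noO r, of x2 z1 z2] xs(2) z1 z2 by auto
  moreover have "r \<in> {n+1..n+k}" "lo < x2" "x2 < up" using r xs(2) by auto
  ultimately have "GoodIn n k lo up" unfolding GoodIn_def by blast
  then show False using ng by simp
qed

lemma gap_count:
  fixes lo up :: real
  assumes fin: "finite (Cs (n + k))"
    and noO: "\<forall>y\<in>Cs n. \<not> (lo < y \<and> y < up)"
    and ng: "\<not> GoodIn n k lo up"
  shows "card (Cs (n + k) \<inter> {lo<..<up}) \<le> 2 * k"
proof -
  let ?A = "\<lambda>r. {x. lo < x \<and> x < up \<and> hi x r \<and> x \<notin> Cs (r - 1)}"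
  have sub: "Cs (n + k) \<inter> {lo<..<up} \<subseteq> (\<Union>r\<in>{n+1..n+k}. ?A r)"
  proof
    fix y assume y: "y \<in> Cs (n + k) \<inter> {lo<..<up}"
    then obtain p where p: "p \<le> n + k" "hi y p" unfolding Cs_def by blast
    define s where "s = (LEAST s. hi y s)"
    have hs: "hi y s" unfolding s_def using p(2) by (rule LeastI)
    have sp: "s \<le> p" unfolding s_def using p(2) by (rule Least_le)
    have sn: "n < s"
    proof (rule ccontr)
      assume "\<not> n < s"
      then have "y \<in> Cs n" using hs Cs_I by simp
      then show False using noO y by auto
    qed
    have "y \<notin> Cs (s - 1)"
    proof
      assume "y \<in> Cs (s - 1)"
      then obtain t where "t \<le> s - 1" "hi y t" unfolding Cs_def by blast
      moreover have "s \<le> t" unfolding s_def using \<open>hi y t\<close> by (rule Least_le)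
      ultimately show False using sn by simp
    qed
    then show "y \<in> (\<Union>r\<in>{n+1..n+k}. ?A r)" using y hs sn sp p(1) by auto
  qed
  have "?A r \<subseteq> Cs (n + k)" if "r \<in> {n+1..n+k}" for r using that Cs_I by auto
  then have finA: "finite (?A r)" if "r \<in> {n+1..n+k}" for r using that fin finite_subset by blast
  have "card (Cs (n + k) \<inter> {lo<..<up}) \<le> card (\<Union>r\<in>{n+1..n+k}. ?A r)"
    using sub finA by (intro card_mono) auto
  also have "\<dots> \<le> (\<Sum>r\<in>{n+1..n+k}. card (?A r))" by (rule card_UN_le) simp
  also have "\<dots> \<le> (\<Sum>r\<in>{n+1..n+k}. 2)"
    using PL[OF fin noO _ _ ng] by (intro sum_mono) auto
  also have "\<dots> = 2 * k" by simp
  finally show ?thesis .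
qed

lemma DB:
  fixes lo up :: real
  assumes fin: "finite (Cs (n + k))"
    and noO: "\<forall>y\<in>Cs n. \<not> (lo < y \<and> y < up)"
  shows "i \<le> k \<Longrightarrow> card (Cs (n + i) \<inter> {lo<..<up}) \<le> 2 ^ i - 1"
proof (induction i)
  case 0
  have "Cs n \<inter> {lo<..<up} = {}" using noO by auto
  then show ?case by simp
next
  case (Suc i)
  let ?G = "Cs (n + i) \<inter> {lo<..<up}"
  let ?H = "{x. lo < x \<and> x < up \<and> hi x (Suc (n + i))}"
  have finG: "finite ?G" using finite_subset[OF Cs_mono fin] Suc.prems by auto
  have "?H \<subseteq> Cs (n + k)" using Suc.prems Cs_I by auto
  then have finH: "finite ?H" using fin finite_subset by blast
  have sub: "Cs (n + Suc i) \<inter> {lo<..<up} \<subseteq> ?G \<union> ?H"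
  proof
    fix y assume y: "y \<in> Cs (n + Suc i) \<inter> {lo<..<up}"
    then obtain p where "p \<le> n + Suc i" "hi y p" unfolding Cs_def by blast
    then show "y \<in> ?G \<union> ?H" using y Cs_I by (cases "p = Suc (n + i)") auto
  qed
  define H' where "H' = {x \<in> ?H. \<exists>z\<in>?G. z < x}"
  define f where "f x = Max {z \<in> ?G. z < x}" for x
  have fH: "f x \<in> ?G \<and> f x < x" if xH: "x \<in> H'" for x
  proof -
    have "finite {z \<in> ?G. z < x}" by (rule finite_subset[OF _ finG]) auto
    moreover have "{z \<in> ?G. z < x} \<noteq> {}" using xH unfolding H'_def by blast
    ultimately have "f x \<in> {z \<in> ?G. z < x}" unfolding f_def by (rule Max_in)
    then show ?thesis by simp
  qed
  have fmax: "z \<le> f x" if xz: "x \<in> H'" "z \<in> ?G" "z < x" for x z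
  proof -
    have "finite {z \<in> ?G. z < x}" by (rule finite_subset[OF _ finG]) auto
    then show ?thesis unfolding f_def using xz by (intro Max_ge) auto
  qed
  have inj: "inj_on f H'"
  proof (rule inj_onI)
    fix x1 x2 assume x: "x1 \<in> H'" "x2 \<in> H'" "f x1 = f x2"
    show "x1 = x2"
    proof (rule ccontr)
      assume "x1 \<noteq> x2"
      then consider "x1 < x2" | "x2 < x1" by linarith
      then show False
      proof cases
        case 1
        have h: "hi x1 (Suc (n + i))" "hi x2 (Suc (n + i))" using x by (auto simp: H'_def)
        obtain z where z: "z \<in> Cs (n + i)" "x1 < z" "z < x2" using gB'[OF h 1] by blast
        have "lo < x1" "x2 < up" using x by (auto simp: H'_def)
        then have "z \<in> ?G" using z by auto
        then have "z \<le> f x2" using fmax[OF x(2)] z by simp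
        then show False using fH[OF x(1)] x(3) z by simp
      next
        case 2
        have h: "hi x2 (Suc (n + i))" "hi x1 (Suc (n + i))" using x by (auto simp: H'_def)
        obtain z where z: "z \<in> Cs (n + i)" "x2 < z" "z < x1" using gB'[OF h 2] by blast
        have "lo < x2" "x1 < up" using x by (auto simp: H'_def)
        then have "z \<in> ?G" using z by auto
        then have "z \<le> f x1" using fmax[OF x(1)] z by simp
        then show False using fH[OF x(2)] x(3) z by simp
      qed
    qed
  qed
  have c1: "card H' \<le> card ?G"
    using card_inj_on_le[OF inj _ finG] fH by blast
  have c2: "card (?H - H') \<le> 1"
  proof (rule ccontr)
    assume "\<not> card (?H - H') \<le> 1"
    then have "card (?H - H') \<ge> 2" by simp
    then obtain x1 x2 where x12: "x1 \<in> ?H - H'" "x2 \<in> ?H - H'" "x1 \<noteq> x2"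
    proof -
      let ?S = "?H - H'"
      have c2S: "card ?S \<ge> 2" by fact
      have "?S \<noteq> {}"
      proof
        assume e: "?S = {}"
        have "card ?S = 0" unfolding e by simp
        then show False using c2S by simp
      qed
      then obtain x1 where x1: "x1 \<in> ?S" by blast
      have "finite ?S" using finH by simp
      then have "card (?S - {x1}) = card ?S - 1" using x1 by simp
      then have c1S: "card (?S - {x1}) \<ge> 1" using c2S by simp
      have "?S - {x1} \<noteq> {}"
      proof
        assume e: "?S - {x1} = {}"
        have "card (?S - {x1}) = 0" unfolding e by simp
        then show False using c1S by simp
      qed
      then obtain x2 where "x2 \<in> ?S - {x1}" by blast
      then show ?thesis using x1 that by blast
    qed
    have gen: False if Y: "y1 \<in> ?H - H'" "y2 \<in> ?H - H'" "y1 < y2" for y1 y2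
    proof -
      have h: "hi y1 (Suc (n + i))" "hi y2 (Suc (n + i))" using Y by auto
      obtain z where z: "z \<in> Cs (n + i)" "y1 < z" "z < y2" using gB'[OF h Y(3)] by blast
      have "lo < y1" "y2 < up" using Y by auto
      then have "z \<in> ?G" using z by auto
      then have "y2 \<in> H'" using Y z unfolding H'_def by auto
      then show False using Y by simp
    qed
    show False using x12 gen by (cases "x1 < x2") (auto simp: not_less_iff_gr_or_eq)
  qed
  have "card ?H \<le> card H' + card (?H - H')"
  proof -
    have "?H = H' \<union> (?H - H')" by (auto simp: H'_def)
    then show ?thesis by (metis card_Un_le)
  qed
  then have cH: "card ?H \<le> card ?G + 1" using c1 c2 by simp
  have "card (Cs (n + Suc i) \<inter> {lo<..<up}) \<le> card (?G \<union> ?H)"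
    using sub finG finH by (intro card_mono) auto
  also have "\<dots> \<le> card ?G + card ?H" by (rule card_Un_le)
  also have "\<dots> \<le> 2 * card ?G + 1" using cH by simp
  also have "\<dots> \<le> 2 * (2 ^ i - 1) + 1" using Suc by simp
  also have "\<dots> = 2 ^ Suc i - 1"
  proof -
    have h: "(1::nat) \<le> 2 ^ i" by simp
    have g: "\<And>X::nat. 1 \<le> X \<Longrightarrow> 2 * (X - 1) + 1 = 2 * X - 1" by arith
    show ?thesis using g[OF h] by simp
  qed
  finally show ?case .
qed


lemma exp_ge_pow2: "(2::real) ^ k \<le> exp (real k)"
proof -
  have "(2::real) \<le> exp 1" using exp_ge_add_one_self[of 1] by simp
  then have "(2::real) ^ k \<le> exp 1 ^ k" by (intro power_mono) simp_all
  also have "exp 1 ^ k = exp (real k)" using exp_of_nat_mult[of k "1::real"] by simp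
  finally show ?thesis .
qed

theorem comb_main:
  assumes k4: "k \<ge> 4"
    and Pk: "exp (real k) < real (card (Cs n))"
    and Gr: "real (card (Cs (n + k))) \<ge> (4 + 2 * real k) * real (card (Cs n))"
  shows "\<exists>xp p xq q xr r. gp xp p xq q xr r \<and> p \<in> {n+1..n+k} \<and> q \<in> {n+1..n+k} \<and> r \<in> {n+1..n+k} \<and>
           \<bar>xp - xq\<bar> \<le> exp (real k) / real (card (Cs n)) \<and>
           \<bar>xp - xr\<bar> \<le> exp (real k) / real (card (Cs n)) \<and>
           \<bar>xq - xr\<bar> \<le> exp (real k) / real (card (Cs n))"
proof (rule ccontr)
  assume ng: "\<not> ?thesis"
  define P0 where "P0 = card (Cs n)"
  define L where "L = exp (real k) / real P0"
  have P0pos: "real P0 > exp (real k)" using Pk by (simp add: P0_def)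
  have P0gt: "P0 > 0" using P0pos exp_gt_zero[of "real k"] by linarith
  have finO: "finite (Cs n)" using P0gt card.infinite unfolding P0_def by fastforce
  have cK: "card (Cs (n + k)) > 0"
  proof -
    have "(4 + 2 * real k) * real P0 > 0" using P0gt by simp
    then show ?thesis using Gr unfolding P0_def by linarith
  qed
  have fin: "finite (Cs (n + k))" using cK card.infinite by fastforce
  have Osub: "Cs n \<subseteq> Cs (n + k)" by (rule Cs_mono) simp
  have Lpos: "L > 0" unfolding L_def using P0gt by simp
  have rng: "0 < x \<and> x < 1" if "x \<in> Cs m" for x m using that rngA unfolding Cs_def by blast
  have ngI: "\<not> GoodIn n k lo up" if "up - lo \<le> L" for lo up
  proof
    assume "GoodIn n k lo up"
    then obtain u p v q x r where g: "gp u p v q x r" "p \<in> {n+1..n+k}" "q \<in> {n+1..n+k}" "r \<in> {n+1..n+k}"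
      "lo < u" "u < up" "lo < v" "v < up" "lo < x" "x < up" unfolding GoodIn_def by blast
    have "\<bar>u - v\<bar> \<le> L" "\<bar>u - x\<bar> \<le> L" "\<bar>v - x\<bar> \<le> L" using g(5-10) that by auto
    then show False using ng g(1-4) unfolding L_def P0_def by blast
  qed
  define G where "G = insert 0 (insert 1 (Cs n))"
  have finG: "finite G" using finO by (simp add: G_def)
  have G01: "\<And>y. y \<in> G \<Longrightarrow> 0 \<le> y \<and> y \<le> 1" unfolding G_def using rng by force
  have n01: "0 \<notin> Cs n" "1 \<notin> Cs n" using rng by force+
  have cardG: "card G = P0 + 2" unfolding G_def P0_def using finO n01 by simp
  define Ls where "Ls = sorted_list_of_set G"
  define g where "g i = Ls ! i" for i
  have lenL: "length Ls = P0 + 2" unfolding Ls_def using cardG finG by simp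
  have setL: "set Ls = G" unfolding Ls_def using finG by simp
  have strict: "sorted_wrt (<) Ls" unfolding Ls_def by (rule strict_sorted_list_of_set)
  have gmono: "g i < g j" if "i < j" "j < P0 + 2" for i j
    unfolding g_def using sorted_wrt_nth_less[OF strict that(1)] that lenL by simp
  have gle: "g i \<le> g j" if "i \<le> j" "j < P0 + 2" for i j
    using gmono[of i j] that by (cases "i = j") auto
  have gG: "g i \<in> G" if "i < P0 + 2" for i unfolding g_def using that lenL setL nth_mem by metis
  have Gg: "\<exists>j<P0+2. y = g j" if "y \<in> G" for y
    using that setL lenL unfolding g_def by (metis in_set_conv_nth)
  have g0: "g 0 = 0"
  proof -
    obtain j where j: "j < P0 + 2" "0 = g j" using Gg[of 0] unfolding G_def by auto
    have "g 0 \<le> g j" using gle[of 0 j] j by simp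
    moreover have "0 \<le> g 0" using G01 gG[of 0] by simp
    ultimately show ?thesis using j by simp
  qed
  have g1: "g (P0 + 1) = 1"
  proof -
    obtain j where j: "j < P0 + 2" "1 = g j" using Gg[of 1] unfolding G_def by auto
    have "g j \<le> g (P0 + 1)" using gle[of j "P0 + 1"] j by simp
    moreover have "g (P0 + 1) \<le> 1" using G01 gG[of "P0 + 1"] by simp
    ultimately show ?thesis using j by simp
  qed
  have noO: "\<forall>y\<in>Cs n. \<not> (g i < y \<and> y < g (Suc i))" if "i < P0 + 1" for i
  proof (intro ballI notI)
    fix y assume y: "y \<in> Cs n" "g i < y \<and> y < g (Suc i)"
    obtain j where j: "j < P0 + 2" "y = g j" using Gg[of y] y(1) unfolding G_def by auto
    have "i < j"
    proof (rule ccontr)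
      assume "\<not> i < j" then have "g j \<le> g i" using gle[of j i] that by simp
      then show False using y j by simp
    qed
    moreover have "j < Suc i"
    proof (rule ccontr)
      assume "\<not> j < Suc i" then have "g (Suc i) \<le> g j" using gle[of "Suc i" j] j by simp
      then show False using y j by simp
    qed
    ultimately show False by simp
  qed
  have cover: "Cs (n + k) - Cs n \<subseteq> (\<Union>i<P0+1. Cs (n + k) \<inter> {g i<..<g (Suc i)})"
  proof
    fix x assume x: "x \<in> Cs (n + k) - Cs n"
    have x01: "0 < x" "x < 1" using rng x by auto
    have xG: "x \<notin> G" using x x01 unfolding G_def by auto
    define I where "I = {i. i < P0 + 2 \<and> g i < x}"
    have finI: "finite I" unfolding I_def by simp
    have I0: "0 \<in> I" unfolding I_def using g0 x01 by simp
    define i0 where "i0 = Max I"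
    have i0I: "i0 \<in> I" unfolding i0_def using finI I0 Max_in by blast
    have i0lt: "i0 < P0 + 1"
    proof (rule ccontr)
      assume "\<not> i0 < P0 + 1"
      then have "i0 = P0 + 1" using i0I unfolding I_def by simp
      then show False using i0I g1 x01 unfolding I_def by simp
    qed
    have "\<not> g (Suc i0) < x"
    proof
      assume "g (Suc i0) < x"
      then have "Suc i0 \<in> I" unfolding I_def using i0lt by simp
      then have "Suc i0 \<le> i0" unfolding i0_def using finI by simp
      then show False by simp
    qed
    moreover have "g (Suc i0) \<noteq> x" using gG[of "Suc i0"] i0lt xG by auto
    ultimately have "x < g (Suc i0)" by simp
    moreover have "g i0 < x" using i0I unfolding I_def by simp
    ultimately show "x \<in> (\<Union>i<P0+1. Cs (n + k) \<inter> {g i<..<g (Suc i)})" using i0lt x by auto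
  qed
  define cnt where "cnt i = card (Cs (n + k) \<inter> {g i<..<g (Suc i)})" for i
  define Long where "Long = {i. i < P0 + 1 \<and> g (Suc i) - g i > L}"
  have cnt_b: "cnt i \<le> 2 * k + (if i \<in> Long then 2 ^ k else 0)" if "i < P0 + 1" for i
  proof (cases "i \<in> Long")
    case True
    have "cnt i \<le> 2 ^ k - 1" unfolding cnt_def
      using DB[OF fin noO[OF that], of k] by simp
    then show ?thesis using True by simp
  next
    case False
    then have "g (Suc i) - g i \<le> L" using that unfolding Long_def by simp
    then have "cnt i \<le> 2 * k" unfolding cnt_def using gap_count[OF fin noO[OF that] ngI] by simp
    then show ?thesis by simp
  qed
  have LongS: "Long \<subseteq> {..<P0+1}" unfolding Long_def by auto
  have "card (Cs (n + k) - Cs n) \<le> card (\<Union>i<P0+1. Cs (n + k) \<inter> {g i<..<g (Suc i)})"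
    using cover fin by (intro card_mono) auto
  also have "\<dots> \<le> (\<Sum>i<P0+1. cnt i)" unfolding cnt_def by (rule card_UN_le) simp
  also have "\<dots> \<le> (\<Sum>i<P0+1. 2 * k + (if i \<in> Long then 2 ^ k else 0))"
    using cnt_b by (intro sum_mono) simp
  also have "\<dots> = (P0 + 1) * (2 * k) + 2 ^ k * card Long"
  proof -
    have "(\<Sum>i<P0+1. (if i \<in> Long then (2::nat) ^ k else 0)) = (\<Sum>i\<in>{..<P0+1} \<inter> Long. 2 ^ k)"
      by (rule sum.inter_restrict[symmetric]) simp
    also have "{..<P0+1} \<inter> Long = Long" using LongS by blast
    finally have "(\<Sum>i<P0+1. (if i \<in> Long then (2::nat) ^ k else 0)) = (\<Sum>i\<in>Long. 2 ^ k)" .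
    then show ?thesis by (simp add: sum.distrib)
  qed
  finally have cnt_tot: "card (Cs (n + k)) - P0 \<le> (P0 + 1) * (2 * k) + 2 ^ k * card Long"
    using card_Diff_subset[OF finO Osub] unfolding P0_def by simp
  have "real (card Long) * L \<le> (\<Sum>i\<in>Long. g (Suc i) - g i)"
  proof -
    have "(\<Sum>i\<in>Long. L) \<le> (\<Sum>i\<in>Long. g (Suc i) - g i)"
      by (intro sum_mono) (simp add: Long_def)
    then show ?thesis by simp
  qed
  also have "\<dots> \<le> (\<Sum>i<P0+1. g (Suc i) - g i)"
    using LongS gle by (intro sum_mono2) auto
  also have "\<dots> = g (P0 + 1) - g 0" by (rule sum_lessThan_telescope)
  also have "\<dots> = 1" using g0 g1 by simp
  finally have cL: "real (card Long) * L \<le> 1" .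
  have "real (2 ^ k * card Long) \<le> exp (real k) * real (card Long)"
    using exp_ge_pow2[of k] by (simp add: mult_right_mono)
  also have "\<dots> = real (card Long) * L * real P0" unfolding L_def using P0gt by simp
  also have "\<dots> \<le> real P0" using cL P0gt by (simp add: mult_left_le_one_le)
  finally have c2: "real (2 ^ k * card Long) \<le> real P0" .
  have "real (card (Cs (n + k))) - real P0 \<le> real (P0 + 1) * (2 * real k) + real P0"
  proof -
    have "real (card (Cs (n + k)) - P0) \<le> real ((P0 + 1) * (2 * k) + 2 ^ k * card Long)"
      using cnt_tot by (simp only: of_nat_le_iff)
    moreover have "real (card (Cs (n + k)) - P0) = real (card (Cs (n + k))) - real P0"
      using card_mono[OF fin Osub] unfolding P0_def by simp
    moreover have "real ((P0 + 1) * (2 * k) + 2 ^ k * card Long) = real (P0 + 1) * (2 * real k) + real (2 ^ k * card Long)"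
      by (simp add: algebra_simps)
    ultimately show ?thesis using c2 by linarith
  qed
  then have "(4 + 2 * real k) * real P0 - real P0 \<le> real (P0 + 1) * (2 * real k) + real P0"
    using Gr unfolding P0_def by linarith
  then have "real P0 \<le> real k" by (simp add: algebra_simps)
  moreover have "real k < exp (real k)" using exp_ge_add_one_self[of "real k"] by linarith
  ultimately show False using P0pos by simp
qed

end


theorem lemma2p2:
  fixes a b c :: complex and n k :: nat
  assumes "nondeg_triangle a b c"
    and "k \<ge> 4"
    and "exp (real k) < real (P_count a b c n)"
    and "real (P_count a b c (n + k)) \<ge> (4 + 2 * real k) * real (P_count a b c n)"
  shows "\<exists>xp p xq q xr r.
           good_position a b c xp p xq q xr r \<and>
           p \<in> {n+1..n+k} \<and> q \<in> {n+1..n+k} \<and> r \<in> {n+1..n+k} \<and>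
           \<bar>xp - xq\<bar> \<le> exp (real k) / real (P_count a b c n) \<and>
           \<bar>xp - xr\<bar> \<le> exp (real k) / real (P_count a b c n) \<and>
           \<bar>xq - xr\<bar> \<le> exp (real k) / real (P_count a b c n)"
proof -
  interpret T: TL a b c by unfold_locales (fact assms(1))
  interpret C: CB "has_index a b c"
  proof
    show "\<And>x p. has_index a b c x p \<Longrightarrow> 0 < x \<and> x < 1" by (rule T.has_index_range)
    show "\<exists>z. (\<exists>p\<le>m. has_index a b c z p) \<and> x < z \<and> z < y"
      if "has_index a b c x (Suc m)" "has_index a b c y (Suc m)" "x < y" for x y m
      using T.gapB[OF that] unfolding cut_points_def by blast
  qed
  have Cs_eq: "C.Cs m = cut_points a b c m" for m
    by (simp add: C.Cs_def cut_points_def)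
  have gp_eq: "C.gp xp p xq q xr r = good_position a b c xp p xq q xr r" for xp p xq q xr r
    by (simp add: C.gp_def good_position_def Cs_eq)
  have P_eq: "P_count a b c m = card (C.Cs m)" for m
    by (simp add: P_count_def Cs_eq)
  show ?thesis
    using C.comb_main[OF assms(2)] assms(3,4) unfolding P_eq gp_eq by blast
qed

end
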